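(* Let $\mathfrak{s}\subset\mathfrak{gl}(n,F)$ be the solvable radical of the Lie algebra of an algebraic group, let $\mathfrak{n}$ be the set of nilpotent elements of $\mathfrak{s}$, and assume there is a commutative subalgebra of $\mathfrak{s}$ of semisimple matrices complementing $\mathfrak{n}$. Let $\mathfrak{h}'$ be a Cartan subalgebra of $\mathfrak{s}$ and $\mathfrak{d}'\subset\mathfrak{s}$ an abelian subalgebra of semisimple matrices with $\mathfrak{s}=\mathfrak{d}'\oplus\mathfrak{n}$ and $\mathfrak{h}' = C_{\mathfrak{s}}(\mathfrak{d}') = \mathfrak{d}'+C_{\mathfrak{n}}(\mathfrak{d}')$. Let $a_1,\dots,a_r$ be a basis of $\mathfrak{h}'$ and let $a_i = s_i + n_i$ be the Jordan decomposition of $a_i$ ($s_i$ semisimple, $n_i$ nilpotent, $[s_i,n_i]=0$). Then $\mathfrak{d}'$ is spanned by $s_1,\dots,s_r$, and $\mathfrak{n}$ is spanned by $n_1,\dots,n_r$ together with $\mathfrak{s}_1(\mathfrak{h}')$.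
   Context: $F$ is a field of characteristic $0$ with algebraic closure $\overline{F}$; the algebraic group is a subgroup of $\mathrm{GL}(n,\overline{F})$ defined over $F$ whose Lie algebra lies in $\mathfrak{gl}(n,F)$. The solvable radical is the largest solvable ideal. $C_{\mathfrak{a}}(\mathfrak{b})=\{x\in\mathfrak{a}\mid[x,y]=0\ \forall y\in\mathfrak{b}\}$. A semisimple matrix is one diagonalizable over $\overline{F}$. A Cartan subalgebra is a nilpotent subalgebra equal to its own normalizer. The Fitting 1-component of $\mathfrak{s}$ with respect to the adjoint action of the nilpotent subalgebra $\mathfrak{h}'$ is $\mathfrak{s}_1(\mathfrak{h}') = \bigcap_{i>0}[\mathfrak{h}'^i,\mathfrak{s}]$, where $[\mathfrak{h}'^i,\mathfrak{s}] = [\mathfrak{h}',[\mathfrak{h}',\cdots,[\mathfrak{h}',\mathfrak{s}]\cdots]]$ with $i$ factors $\mathfrak{h}'$. *)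

theory Defs
  imports "HOL-Analysis.Analysis" "HOL-Computational_Algebra.Polynomial"
begin

type_synonym ('a,'n) sqm = "'a^'n^'n"

definition smat :: "'a::field \<Rightarrow> ('a,'n::finite) sqm \<Rightarrow> ('a,'n) sqm" where
  "smat c A = (\<chi> i j. c * A$i$j)"

abbreviation lspan :: "('a::field,'n::finite) sqm set \<Rightarrow> ('a,'n) sqm set" where
  "lspan \<equiv> module.span smat"

abbreviation lsubspace :: "('a::field,'n::finite) sqm set \<Rightarrow> bool" where
  "lsubspace \<equiv> module.subspace smat"

abbreviation lindep :: "('a::field,'n::finite) sqm set \<Rightarrow> bool" where
  "lindep \<equiv> module.dependent smat"

definition brk :: "('a::field,'n::finite) sqm \<Rightarrow> ('a,'n) sqm \<Rightarrow> ('a,'n) sqm" where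
  "brk x y = x ** y - y ** x"

definition Brk :: "('a::field,'n::finite) sqm set \<Rightarrow> ('a,'n) sqm set \<Rightarrow> ('a,'n) sqm set" where
  "Brk A B = lspan {brk a b | a b. a \<in> A \<and> b \<in> B}"

definition lie_subalg :: "('a::field,'n::finite) sqm set \<Rightarrow> bool" where
  "lie_subalg L \<longleftrightarrow> lsubspace L \<and> (\<forall>x\<in>L. \<forall>y\<in>L. brk x y \<in> L)"

definition lie_ideal :: "('a::field,'n::finite) sqm set \<Rightarrow> ('a,'n) sqm set \<Rightarrow> bool" where
  "lie_ideal I L \<longleftrightarrow> lsubspace I \<and> I \<subseteq> L \<and> (\<forall>x\<in>L. \<forall>y\<in>I. brk x y \<in> I)"

fun derived_series :: "('a::field,'n::finite) sqm set \<Rightarrow> nat \<Rightarrow> ('a,'n) sqm set" where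
  "derived_series L 0 = L"
| "derived_series L (Suc k) = Brk (derived_series L k) (derived_series L k)"

definition lie_solvable :: "('a::field,'n::finite) sqm set \<Rightarrow> bool" where
  "lie_solvable L \<longleftrightarrow> (\<exists>k. derived_series L k = {0})"

fun lower_central :: "('a::field,'n::finite) sqm set \<Rightarrow> nat \<Rightarrow> ('a,'n) sqm set" where
  "lower_central L 0 = L"
| "lower_central L (Suc k) = Brk L (lower_central L k)"

definition lie_nilpotent :: "('a::field,'n::finite) sqm set \<Rightarrow> bool" where
  "lie_nilpotent L \<longleftrightarrow> (\<exists>k. lower_central L k = {0})"

definition solvable_radical :: "('a::field,'n::finite) sqm set \<Rightarrow> ('a,'n) sqm set \<Rightarrow> bool" where
  "solvable_radical L S \<longleftrightarrow> lie_ideal S L \<and> lie_solvable S \<and>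
     (\<forall>I. lie_ideal I L \<and> lie_solvable I \<longrightarrow> I \<subseteq> S)"

definition centralizer :: "('a::field,'n::finite) sqm set \<Rightarrow> ('a,'n) sqm set \<Rightarrow> ('a,'n) sqm set" where
  "centralizer A B = {x \<in> A. \<forall>y\<in>B. brk x y = 0}"

definition normalizer :: "('a::field,'n::finite) sqm set \<Rightarrow> ('a,'n) sqm set \<Rightarrow> ('a,'n) sqm set" where
  "normalizer L H = {x \<in> L. \<forall>y\<in>H. brk x y \<in> H}"

definition cartan_subalg :: "('a::field,'n::finite) sqm set \<Rightarrow> ('a,'n) sqm set \<Rightarrow> bool" where
  "cartan_subalg L H \<longleftrightarrow> lie_subalg H \<and> H \<subseteq> L \<and> lie_nilpotent H \<and> normalizer L H = H"

fun iter_brk :: "('a::field,'n::finite) sqm set \<Rightarrow> nat \<Rightarrow> ('a,'n) sqm set \<Rightarrow> ('a,'n) sqm set" where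
  "iter_brk H 0 S = S"
| "iter_brk H (Suc i) S = Brk H (iter_brk H i S)"

definition fitting_one :: "('a::field,'n::finite) sqm set \<Rightarrow> ('a,'n) sqm set \<Rightarrow> ('a,'n) sqm set" where
  "fitting_one H S = (\<Inter>i\<in>{i. i > 0}. iter_brk H i S)"

definition setsum :: "('a::field,'n::finite) sqm set \<Rightarrow> ('a,'n) sqm set \<Rightarrow> ('a,'n) sqm set" where
  "setsum A B = {a + b | a b. a \<in> A \<and> b \<in> B}"

definition is_alg_closure :: "('f::field \<Rightarrow> 'k::field) \<Rightarrow> bool" where
  "is_alg_closure emb \<longleftrightarrow>
     emb 0 = 0 \<and> emb 1 = 1 \<and> (\<forall>x y. emb (x + y) = emb x + emb y) \<and> (\<forall>x y. emb (x * y) = emb x * emb y)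
   \<and> (\<forall>p :: 'k poly. degree p > 0 \<longrightarrow> (\<exists>x. poly p x = 0))
   \<and> (\<forall>x :: 'k. \<exists>p :: 'f poly. p \<noteq> 0 \<and> poly (map_poly emb p) x = 0)"

definition map_mat :: "('f \<Rightarrow> 'k) \<Rightarrow> 'f^'n::finite^'m::finite \<Rightarrow> 'k^'n^'m" where
  "map_mat emb A = (\<chi> i j. emb (A$i$j))"

definition diagonal_mat :: "('k::zero,'n::finite) sqm \<Rightarrow> bool" where
  "diagonal_mat D \<longleftrightarrow> (\<forall>i j. i \<noteq> j \<longrightarrow> D$i$j = 0)"

definition semisimple_mat :: "('f::field \<Rightarrow> 'k::field) \<Rightarrow> ('f,'n::finite) sqm \<Rightarrow> bool" where
  "semisimple_mat emb A \<longleftrightarrow> (\<exists>(P :: ('k,'n) sqm) D. invertible P \<and> diagonal_mat D \<and>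
      P ** map_mat emb A = D ** P)"

definition nilpotent_mat :: "('a::field,'n::finite) sqm \<Rightarrow> bool" where
  "nilpotent_mat A \<longleftrightarrow> (\<exists>k. ((\<lambda>M. A ** M) ^^ k) (mat 1) = 0)"

text \<open>Polynomial expressions in the matrix entries x_ij with coefficients in 'a.\<close>
datatype ('a,'i) mexpr = MC 'a | MV 'i | MAdd "('a,'i) mexpr" "('a,'i) mexpr"
  | MMul "('a,'i) mexpr" "('a,'i) mexpr" | MNeg "('a,'i) mexpr"

fun meval :: "('a \<Rightarrow> 'k::comm_ring_1) \<Rightarrow> 'k^'n^'n \<Rightarrow> ('a,'n \<times> 'n) mexpr \<Rightarrow> 'k" where
  "meval c g (MC a) = c a"
| "meval c g (MV (i,j)) = g$i$j"
| "meval c g (MAdd p q) = meval c g p + meval c g q"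
| "meval c g (MMul p q) = meval c g p * meval c g q"
| "meval c g (MNeg p) = - meval c g p"

fun mdiff :: "('a \<Rightarrow> 'k::comm_ring_1) \<Rightarrow> 'k^'n^'n \<Rightarrow> ('a,'n \<times> 'n) mexpr \<Rightarrow> 'k" where
  "mdiff c X (MC a) = 0"
| "mdiff c X (MV (i,j)) = X$i$j"
| "mdiff c X (MAdd p q) = mdiff c X p + mdiff c X q"
| "mdiff c X (MMul p q) = meval c (mat 1) p * mdiff c X q + mdiff c X p * meval c (mat 1) q"
| "mdiff c X (MNeg p) = - mdiff c X p"

definition alg_group_over :: "('f::field \<Rightarrow> 'k::field) \<Rightarrow> ('k,'n::finite) sqm set \<Rightarrow> bool" where
  "alg_group_over emb G \<longleftrightarrow>
     mat 1 \<in> G \<and> (\<forall>g\<in>G. \<forall>h\<in>G. g ** h \<in> G) \<and> (\<forall>g\<in>G. invertible g \<and> matrix_inv g \<in> G)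
   \<and> (\<exists>S :: ('f,'n \<times> 'n) mexpr set. G = {g. invertible g \<and> (\<forall>p\<in>S. meval emb g p = 0)})"

definition lie_alg_K :: "('k::field,'n::finite) sqm set \<Rightarrow> ('k,'n) sqm set" where
  "lie_alg_K G = {X. \<forall>p :: ('k,'n \<times> 'n) mexpr. (\<forall>g\<in>G. meval id g p = 0) \<longrightarrow> mdiff id X p = 0}"

definition lie_alg_F :: "('f::field \<Rightarrow> 'k::field) \<Rightarrow> ('k,'n::finite) sqm set \<Rightarrow> ('f,'n) sqm set" where
  "lie_alg_F emb G = {A. map_mat emb A \<in> lie_alg_K G}"

end

theory Submission
  imports Defs
begin

section \<open>F-matrices as a vector space\<close>

lemma smat_simps[simp]: "smat c A $ i $ j = c * A $ i $ j"
  by (simp add: smat_def)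

interpretation mv: vector_space "smat :: 'a::field \<Rightarrow> ('a,'n::finite) sqm \<Rightarrow> ('a,'n) sqm"
  by unfold_locales (simp_all add: vec_eq_iff algebra_simps)

definition ematr :: "'n \<Rightarrow> 'n \<Rightarrow> ('a::field,'n::finite) sqm" where
  "ematr a b = (\<chi> i j. if i = a \<and> j = b then 1 else 0)"

definition mbasis :: "('a::field,'n::finite) sqm set" where
  "mbasis = (\<lambda>(a,b). ematr a b) ` UNIV"

lemma ematr_inj: "ematr a b = (ematr c d :: ('a::field,'n::finite) sqm) \<longleftrightarrow> a = c \<and> b = d"
proof
  assume "ematr a b = (ematr c d :: ('a::field,'n::finite) sqm)"
  hence "ematr a b $ a $ b = (ematr c d :: ('a::field,'n::finite) sqm) $ a $ b" by simp
  thus "a = c \<and> b = d" by (simp add: ematr_def split: if_splits)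
qed auto

lemma mat_expand: "(\<Sum>p\<in>UNIV. smat (A $ fst p $ snd p) (ematr (fst p) (snd p))) = (A::('a::field,'n::finite) sqm)"
proof -
  have "(\<Sum>p\<in>UNIV. smat (A $ fst p $ snd p) (ematr (fst p) (snd p))) $ i $ j = A $ i $ j" for i j
  proof -
    have "(\<Sum>p\<in>UNIV. smat (A $ fst p $ snd p) (ematr (fst p) (snd p))) $ i $ j
       = (\<Sum>p\<in>UNIV. A $ fst p $ snd p * (if i = fst p \<and> j = snd p then 1 else 0))"
      by (simp add: sum_component ematr_def)
    also have "\<dots> = (\<Sum>p\<in>UNIV. if p = (i,j) then A $ i $ j else 0)"
      by (rule sum.cong) auto
    also have "\<dots> = A $ i $ j" by simp
    finally show ?thesis .
  qed
  thus ?thesis by (simp add: vec_eq_iff)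
qed

lemma mbasis_indep: "\<not> mv.dependent (mbasis :: ('a::field,'n::finite) sqm set)"
proof -
  have fin: "finite (mbasis :: ('a::field,'n::finite) sqm set)" by (simp add: mbasis_def)
  show ?thesis
  proof (rule mv.independent_if_scalars_zero[OF fin])
    fix f :: "('a,'n) sqm \<Rightarrow> 'a" and x :: "('a,'n) sqm"
    assume eq: "(\<Sum>x\<in>mbasis. smat (f x) x) = 0" and x: "x \<in> mbasis"
    obtain a b where xab: "x = ematr a b" using x by (auto simp: mbasis_def)
    have inj: "inj (\<lambda>(a,b). (ematr a b :: ('a,'n) sqm))"
      by (auto simp: inj_def ematr_inj)
    have "0 = (\<Sum>x\<in>mbasis. smat (f x) x) $ a $ b" using eq by simp
    also have "\<dots> = (\<Sum>p\<in>UNIV. f (ematr (fst p) (snd p)) * (ematr (fst p) (snd p) :: ('a,'n) sqm) $ a $ b)"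
      unfolding mbasis_def
      by (subst sum.reindex[OF inj]) (simp add: sum_component case_prod_beta)
    also have "\<dots> = (\<Sum>p\<in>UNIV. if p = (a,b) then f (ematr a b) else 0)"
      by (rule sum.cong) (auto simp: ematr_def)
    also have "\<dots> = f x" by (simp add: xab)
    finally show "f x = 0" by simp
  qed
qed

lemma mbasis_span: "mv.span (mbasis :: ('a::field,'n::finite) sqm set) = UNIV"
proof -
  have "A \<in> mv.span mbasis" for A :: "('a,'n) sqm"
  proof -
    have "(\<Sum>p\<in>UNIV. smat (A $ fst p $ snd p) (ematr (fst p) (snd p))) \<in> mv.span mbasis"
      by (intro mv.span_sum mv.span_scale mv.span_base) (auto simp: mbasis_def)
    thus ?thesis by (simp add: mat_expand)
  qed
  thus ?thesis by auto
qed

interpretation mv: finite_dimensional_vector_space "smat :: 'a::field \<Rightarrow> ('a,'n::finite) sqm \<Rightarrow> ('a,'n) sqm" mbasis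
proof
  show "finite (mbasis :: ('a,'n) sqm set)" by (simp add: mbasis_def)
qed (use mbasis_indep mbasis_span in auto)


locale ac =
  fixes emb :: "'f::field_char_0 \<Rightarrow> 'k::field"
  assumes clos: "is_alg_closure emb"
begin

lemma emb_0[simp]: "emb 0 = 0" and emb_1[simp]: "emb 1 = 1"
  and emb_add[simp]: "emb (x + y) = emb x + emb y"
  and emb_mult[simp]: "emb (x * y) = emb x * emb y"
  using clos by (auto simp: is_alg_closure_def)

lemma alg_closed: "degree (p :: 'k poly) > 0 \<Longrightarrow> \<exists>x. poly p x = 0"
  using clos by (auto simp: is_alg_closure_def)

lemma emb_neg[simp]: "emb (- x) = - emb x"
proof -
  have "emb (- x) + emb x = 0" by (metis emb_add emb_0 add.left_inverse)
  thus ?thesis by (simp add: eq_neg_iff_add_eq_0)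
qed

lemma emb_diff[simp]: "emb (x - y) = emb x - emb y"
  by (metis emb_add emb_neg diff_conv_add_uminus)

lemma emb_sum[simp]: "emb (sum f S) = sum (\<lambda>i. emb (f i)) S"
  by (induction S rule: infinite_finite_induct) auto

lemma emb_eq0[simp]: "emb x = 0 \<longleftrightarrow> x = 0"
proof
  assume "emb x = 0"
  show "x = 0"
  proof (rule ccontr)
    assume "x \<noteq> 0"
    hence "emb x * emb (inverse x) = 1" by (metis emb_1 emb_mult right_inverse)
    with \<open>emb x = 0\<close> show False by simp
  qed
qed simp

lemma emb_inj[simp]: "emb x = emb y \<longleftrightarrow> x = y"
  by (metis emb_diff emb_eq0 eq_iff_diff_eq_0)

lemma emb_of_nat[simp]: "emb (of_nat m) = of_nat m"
  by (induction m) auto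

lemma K_char0: "(of_nat m :: 'k) = 0 \<longleftrightarrow> m = 0"
  by (metis emb_of_nat emb_eq0 of_nat_eq_0_iff)

abbreviation phi :: "('f,'n::finite) sqm \<Rightarrow> ('k,'n) sqm" where
  "phi A \<equiv> map_mat emb A"

lemma phi_comp[simp]: "phi A $ i $ j = emb (A $ i $ j)"
  by (simp add: map_mat_def)

lemma phi_add[simp]: "phi (A + B) = phi A + phi B"
  and phi_diff[simp]: "phi (A - B) = phi A - phi B"
  and phi_0[simp]: "phi 0 = 0"
  and phi_one[simp]: "phi (mat 1) = mat 1"
  and phi_smat[simp]: "phi (smat c A) = smat (emb c) (phi A)"
  by (simp_all add: vec_eq_iff mat_def)

lemma phi_mult[simp]: "phi (A ** B) = phi A ** phi B"
  by (simp add: vec_eq_iff matrix_matrix_mult_def)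

lemma phi_brk[simp]: "phi (brk A B) = brk (phi A) (phi B)"
  by (simp add: brk_def)

lemma phi_inj[simp]: "phi A = phi B \<longleftrightarrow> A = B"
  by (auto simp: vec_eq_iff)

lemma phi_eq0[simp]: "phi A = 0 \<longleftrightarrow> A = 0"
  by (metis phi_0 phi_inj)

lemma phi_sum[simp]: "phi (sum f S) = sum (\<lambda>i. phi (f i)) S"
  by (induction S rule: infinite_finite_induct) auto

end

lemma mpow_vec: "((\<lambda>M. A ** M) ^^ k) (mat 1) *v w = (((*v) A) ^^ k) w"
  for A :: "('a::field,'n::finite) sqm"
proof (induction k arbitrary: w)
  case (Suc k)
  have "((\<lambda>M. A ** M) ^^ Suc k) (mat 1) *v w = (A ** ((\<lambda>M. A ** M) ^^ k) (mat 1)) *v w" by simp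
  also have "\<dots> = A *v (((\<lambda>M. A ** M) ^^ k) (mat 1) *v w)" by (simp add: matrix_vector_mul_assoc)
  also have "\<dots> = (((*v) A) ^^ Suc k) w" using Suc by simp
  finally show ?case .
qed simp

lemma nilpotent_vec: "nilpotent_mat (A :: ('a::field,'n::finite) sqm) \<longleftrightarrow> (\<exists>k. \<forall>w. (((*v) A) ^^ k) w = 0)"
  unfolding nilpotent_mat_def
  by (metis mpow_vec matrix_eq matrix_vector_mult_0)

context ac begin

lemma phi_mpow: "phi (((\<lambda>M. A ** M) ^^ k) (mat 1)) = ((\<lambda>M. phi A ** M) ^^ k) (mat 1)"
  by (induction k) simp_all

lemma nilpotent_phi[simp]: "nilpotent_mat (phi A) \<longleftrightarrow> nilpotent_mat A"
  unfolding nilpotent_mat_def by (metis phi_mpow phi_eq0)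

end


abbreviation it :: "('a::field,'n::finite) sqm \<Rightarrow> nat \<Rightarrow> 'a^'n \<Rightarrow> 'a^'n" where
  "it X k w \<equiv> (((*v) X) ^^ k) w"

lemma it_Suc: "it X (Suc k) w = X *v it X k w"
  by simp

lemma it_Suc_right: "it X (Suc k) w = it X k (X *v w)"
  by (simp add: funpow_Suc_right del: funpow.simps)

lemma it_0v[simp]: "it X k 0 = 0"
  by (induction k) auto

lemma it_add: "it X k (x + y) = it X k x + it X k y"
  by (induction k) (auto simp: matrix_vector_right_distrib)

lemma it_diff: "it X k (x - y) = it X k x - it X k y"
  by (induction k) (auto simp: matrix_vector_mult_diff_distrib)

lemma mv_scale: "A *v (c *s x) = c *s (A *v x)"
  for A :: "('a::field,'n::finite) sqm"
  by (simp add: vec.scale)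

lemma it_scale: "it X k (c *s x) = c *s it X k x"
  by (induction k) (auto simp: mv_scale)

lemma commute_vec: "X ** Y = Y ** X \<Longrightarrow> X *v (Y *v w) = Y *v (X *v w)"
  by (simp add: matrix_vector_mul_assoc)

lemma it_commute: "X ** Y = Y ** X \<Longrightarrow> it X k (Y *v w) = Y *v it X k w"
  by (induction k) (auto simp: commute_vec)

lemma it_intertwine: "P ** A = B ** P \<Longrightarrow> P *v it A k v = it B k (P *v v)"
proof (induction k)
  case (Suc k)
  have "P *v it A (Suc k) v = (P ** A) *v it A k v" by (simp add: matrix_vector_mul_assoc)
  also have "\<dots> = B *v (P *v it A k v)" by (simp add: Suc.prems matrix_vector_mul_assoc)
  finally show ?case using Suc by simp
qed simp

lemma it_add_exp: "it X (a + b) w = it X a (it X b w)"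
  by (simp add: funpow_add)

lemma mat_mv: "mat c *v v = c *s v"
  by (simp add: vec_eq_iff matrix_vector_mult_def mat_def if_distrib if_distribR cong: if_cong)

lemma mat_comm: "mat c ** M = M ** mat c"
  for M :: "('a::field,'n::finite) sqm"
  by (simp add: vec_eq_iff matrix_matrix_mult_def mat_def if_distrib if_distribR mult.commute cong: if_cong)

lemma matrix_add_rdistrib: "(B + C) ** A = B ** A + C ** A"
  by (vector matrix_matrix_mult_def sum.distrib[symmetric] field_simps)

lemma matrix_diff_rdistrib: "(B - C) ** A = B ** A - C ** A"
  for A :: "('a::field,'n::finite) sqm"
  by (vector matrix_matrix_mult_def sum_subtractf[symmetric] field_simps)

lemma matrix_diff_ldistrib: "A ** (B - C) = A ** B - A ** C"
  for A :: "('a::field,'n::finite) sqm"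
  by (vector matrix_matrix_mult_def sum_subtractf[symmetric] field_simps)

lemma diag_mv: "diagonal_mat D \<Longrightarrow> (D *v y) $ i = D $ i $ i * y $ i"
  unfolding diagonal_mat_def matrix_vector_mult_def
  by (simp add: sum.remove[of UNIV i])

lemma it_diag: "diagonal_mat D \<Longrightarrow> it D k y $ i = (D $ i $ i) ^ k * y $ i"
  by (induction k) (auto simp: diag_mv)

lemma diagonal_diff_mat: "diagonal_mat D \<Longrightarrow> diagonal_mat (D - mat c)"
  for D :: "('a::field,'n::finite) sqm"
  by (simp add: diagonal_mat_def mat_def)

lemma invertible_cancel: "invertible P \<Longrightarrow> P *v x = 0 \<Longrightarrow> x = 0"
  for P :: "('a::field,'n::finite) sqm"
  by (metis invertible_def matrix_vector_mul_assoc matrix_vector_mul_lid matrix_vector_mult_0_right)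

lemma diag_kernel:
  fixes X P D :: "('a::field,'n::finite) sqm"
  assumes P: "invertible P" and D: "diagonal_mat D" and PX: "P ** X = D ** P"
    and z: "it (X - mat mu) k v = 0"
  shows "(X - mat mu) *v v = 0"
proof -
  let ?D = "D - mat mu"
  have PX': "P ** (X - mat mu) = ?D ** P"
    by (simp add: matrix_diff_ldistrib matrix_diff_rdistrib PX mat_comm)
  have dD: "diagonal_mat ?D" using D by (rule diagonal_diff_mat)
  have "it ?D k (P *v v) = 0"
    using it_intertwine[OF PX', of k v] z by simp
  hence "\<forall>i. (?D $ i $ i) ^ k * (P *v v) $ i = 0"
    using it_diag[OF dD] by (metis vec_eq_iff zero_index)
  hence "\<forall>i. ?D $ i $ i * (P *v v) $ i = 0"
    by (metis mult_eq_0_iff power_eq_0_iff)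
  hence "?D *v (P *v v) = 0" by (simp add: vec_eq_iff diag_mv[OF dD])
  hence "P *v ((X - mat mu) *v v) = 0"
    by (simp add: matrix_vector_mul_assoc PX')
  thus ?thesis using P invertible_cancel by blast
qed

lemma it_diff_nil:
  fixes U V :: "('a::field,'n::finite) sqm"
  assumes UV: "U ** V = V ** U"
  shows "it U a w = 0 \<Longrightarrow> it V b w = 0 \<Longrightarrow> it (U - V) (a + b) w = 0"
proof (induction "a + b" arbitrary: a b w)
  case 0
  thus ?case by simp
next
  case (Suc n)
  show ?case
  proof (cases "a = 0 \<or> b = 0")
    case True
    hence "w = 0" using Suc.prems by auto
    thus ?thesis by simp
  next
    case False
    then obtain a' b' where a: "a = Suc a'" and b: "b = Suc b'"
      by (metis not0_implies_Suc)
    have "it (U - V) (a + b) w = it (U - V) (a' + b) ((U - V) *v w)"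
      by (simp add: a it_Suc_right del: funpow.simps)
    also have "\<dots> = it (U - V) (a' + b) (U *v w) - it (U - V) (a + b') (V *v w)"
    proof -
      have e: "a' + b = a + b'" by (simp add: a b)
      show ?thesis by (simp only: matrix_vector_mult_diff_rdistrib it_diff e)
    qed
    also have "it (U - V) (a' + b) (U *v w) = 0"
    proof (rule Suc.hyps)
      show "n = a' + b" using Suc.hyps(2) a by simp
      show "it U a' (U *v w) = 0" using Suc.prems(1) by (simp add: a it_Suc_right del: funpow.simps)
      show "it V b (U *v w) = 0" using Suc.prems(2) it_commute[of V U b w] UV by simp
    qed
    also have "it (U - V) (a + b') (V *v w) = 0"
    proof (rule Suc.hyps)
      show "n = a + b'" using Suc.hyps(2) b by simp
      show "it V b' (V *v w) = 0" using Suc.prems(2) by (simp add: b it_Suc_right del: funpow.simps)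
      show "it U a (V *v w) = 0" using Suc.prems(1) it_commute[of U V a w] UV by simp
    qed
    finally show ?thesis by simp
  qed
qed

lemma column_mult: "column j (A ** B) = A *v column j B"
  by (simp add: vec_eq_iff column_def matrix_matrix_mult_def matrix_vector_mult_def)

lemma column_diag: "diagonal_mat D \<Longrightarrow> column j (A ** D) = D $ j $ j *s column j A"
  for A :: "('a::field,'n::finite) sqm"
  unfolding diagonal_mat_def
  by (simp add: vec_eq_iff column_def matrix_matrix_mult_def sum.remove[of UNIV j] mult.commute)

lemma matrix_eq_columns: "(\<And>j. column j A = column j B) \<Longrightarrow> A = B"
  by (simp add: vec_eq_iff column_def)

lemma jordan_unique:
  fixes X M S Q :: "('a::field,'n::finite) sqm"
  assumes X: "\<exists>(P::('a,'n) sqm) D. invertible P \<and> diagonal_mat D \<and> P ** X = D ** P"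
    and S: "\<exists>(P::('a,'n) sqm) D. invertible P \<and> diagonal_mat D \<and> P ** S = D ** P"
    and M: "nilpotent_mat M" and Q: "nilpotent_mat Q"
    and XM: "X ** M = M ** X" and SQ: "S ** Q = Q ** S"
    and eq: "X + M = S + Q"
  shows "X = S"
proof -
  obtain P D :: "('a,'n) sqm" where P: "invertible P" and D: "diagonal_mat D" and PX: "P ** X = D ** P" using X by blast
  obtain P2 D2 :: "('a,'n) sqm" where P2: "invertible P2" and D2: "diagonal_mat D2" and PS: "P2 ** S = D2 ** P2"
    using S by blast
  obtain Pi :: "('a,'n) sqm" where Pi1: "P2 ** Pi = mat 1" and Pi2: "Pi ** P2 = mat 1"
    using P2 by (auto simp: invertible_def)
  obtain kq where kq: "\<And>w. it Q kq w = 0" using Q by (auto simp: nilpotent_vec)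
  obtain km where km: "\<And>w. it M km w = 0" using M by (auto simp: nilpotent_vec)
  have eig: "X *v v = S *v v" if Sv: "S *v v = mu *s v" for v mu
  proof -
    let ?A = "S + Q"
    have SQv: "S *v it Q k v = mu *s it Q k v" for k
      using it_commute[OF SQ[symmetric], of k v] Sv it_scale by metis
    have "it (?A - mat mu) k v = it Q k v" for k
    proof (induction k)
      case (Suc k)
      have "it (?A - mat mu) (Suc k) v = (?A - mat mu) *v it Q k v" by (simp add: Suc)
      also have "\<dots> = Q *v it Q k v"
        by (simp add: matrix_vector_mult_diff_rdistrib matrix_vector_mult_add_rdistrib SQv mat_mv)
      finally show ?case by simp
    qed simp
    hence U0: "it (?A - mat mu) kq v = 0" using kq by simp
    have comm: "(?A - mat mu) ** M = M ** (?A - mat mu)"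
      by (simp add: eq[symmetric] matrix_add_rdistrib matrix_add_ldistrib matrix_diff_rdistrib
          matrix_diff_ldistrib XM mat_comm)
    have "it ((?A - mat mu) - M) (kq + km) v = 0"
      by (rule it_diff_nil[OF comm U0 km])
    moreover have "(?A - mat mu) - M = X - mat mu" by (simp add: eq[symmetric])
    ultimately have "it (X - mat mu) (kq + km) v = 0" by simp
    hence "(X - mat mu) *v v = 0" by (rule diag_kernel[OF P D PX])
    thus ?thesis using Sv by (simp add: matrix_vector_mult_diff_rdistrib mat_mv)
  qed
  have SPi: "S ** Pi = Pi ** D2"
  proof -
    have "S ** Pi = Pi ** (P2 ** S) ** Pi" by (simp add: matrix_mul_assoc Pi2)
    also have "\<dots> = Pi ** D2" by (simp add: PS matrix_mul_assoc[symmetric] Pi1)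
    finally show ?thesis .
  qed
  have "X ** Pi = S ** Pi"
  proof (rule matrix_eq_columns)
    fix j
    have "S *v column j Pi = D2 $ j $ j *s column j Pi"
      using column_mult[of j S Pi] column_diag[OF D2, of j Pi] SPi by simp
    hence "X *v column j Pi = S *v column j Pi" by (rule eig)
    thus "column j (X ** Pi) = column j (S ** Pi)" by (simp add: column_mult)
  qed
  hence "X ** Pi ** P2 = S ** Pi ** P2" by simp
  thus ?thesis by (simp add: matrix_mul_assoc[symmetric] Pi2)
qed


section \<open>Bracket algebra\<close>

lemma smat_mult_left: "smat c A ** B = smat c (A ** B)"
  by (simp add: vec_eq_iff matrix_matrix_mult_def sum_distrib_left mult.assoc)

lemma smat_mult_right: "A ** smat c B = smat c (A ** B)"
  for A :: "('a::field,'n::finite) sqm"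
  by (simp add: vec_eq_iff matrix_matrix_mult_def sum_distrib_left mult.left_commute)

lemma smat_diff: "smat c (A - B) = smat c A - smat c B"
  by (simp add: vec_eq_iff algebra_simps)

lemma brk_add_right: "brk a (y + z) = brk a y + brk a z"
  by (simp add: brk_def matrix_add_ldistrib matrix_add_rdistrib)

lemma brk_add_left: "brk (y + z) a = brk y a + brk z a"
  by (simp add: brk_def matrix_add_ldistrib matrix_add_rdistrib)

lemma brk_diff_right: "brk a (y - z) = brk a y - brk a z"
  by (simp add: brk_def matrix_diff_ldistrib matrix_diff_rdistrib)

lemma brk_diff_left: "brk (y - z) a = brk y a - brk z a"
  by (simp add: brk_def matrix_diff_ldistrib matrix_diff_rdistrib)

lemma brk_smat_right: "brk a (smat c y) = smat c (brk a y)"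
  by (simp add: brk_def smat_mult_left smat_mult_right smat_diff)

lemma brk_smat_left: "brk (smat c y) a = smat c (brk y a)"
  by (simp add: brk_def smat_mult_left smat_mult_right smat_diff)

lemma brk_antisym: "brk a b = - brk b a"
  by (simp add: brk_def)

lemma brk_0_right[simp]: "brk a 0 = 0" and brk_0_left[simp]: "brk 0 a = 0"
  by (simp_all add: brk_def)

lemma brk_self[simp]: "brk a a = 0"
  by (simp add: brk_def)

lemma brk_jacobi_comm:
  fixes x y w :: "('a::field,'n::finite) sqm"
  assumes "brk x y = 0"
  shows "brk y (brk x w) = brk x (brk y w)"
proof -
  have xy: "x ** y = y ** x" using assms by (simp add: brk_def)
  have wxy: "(w ** x) ** y = (w ** y) ** x" by (metis matrix_mul_assoc xy)
  show ?thesis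
    by (simp add: brk_def matrix_diff_ldistrib matrix_diff_rdistrib matrix_mul_assoc xy wxy)
qed

lemma linear_m:
  assumes "\<And>a b. f (a + b) = f a + f b" "\<And>c a. f (smat c a) = smat c (f a)"
  shows "Vector_Spaces.linear smat smat (f :: ('a::field,'n::finite) sqm \<Rightarrow> ('a,'n) sqm)"
  unfolding module_hom_iff_linear[symmetric] module_hom_def module_hom_axioms_def
  using mv.module_axioms assms by auto

lemma linear_brk: "Vector_Spaces.linear smat smat (brk (x :: ('a::field,'n::finite) sqm))"
  by (rule linear_m) (simp_all add: brk_add_right brk_smat_right)

lemma diag_left: "diagonal_mat D \<Longrightarrow> (D ** Z) $ i $ j = D $ i $ i * Z $ i $ j"
  for D :: "('a::field,'n::finite) sqm"
  unfolding diagonal_mat_def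
  by (simp add: matrix_matrix_mult_def sum.remove[of UNIV i])

lemma diag_right: "diagonal_mat D \<Longrightarrow> (Z ** D) $ i $ j = Z $ i $ j * D $ j $ j"
  for D :: "('a::field,'n::finite) sqm"
  unfolding diagonal_mat_def
  by (simp add: matrix_matrix_mult_def sum.remove[of UNIV j])

lemma brk_diag: "diagonal_mat D \<Longrightarrow> brk D Z $ i $ j = (D $ i $ i - D $ j $ j) * Z $ i $ j"
  for D :: "('a::field,'n::finite) sqm"
  unfolding brk_def by (simp add: diag_left diag_right algebra_simps)

context ac begin

lemma ss_brk2:
  fixes x y :: "('f,'n::finite) sqm"
  assumes ss: "semisimple_mat emb x" and z: "brk x (brk x y) = 0"
  shows "brk x y = 0"
proof -
  obtain P D :: "('k,'n) sqm" where P: "invertible P" and D: "diagonal_mat D" and PX: "P ** phi x = D ** P"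
    using ss by (auto simp: semisimple_mat_def)
  obtain Pi :: "('k,'n) sqm" where Pi1: "P ** Pi = mat 1" and Pi2: "Pi ** P = mat 1"
    using P by (auto simp: invertible_def)
  let ?X = "phi x"
  have XPi: "?X ** Pi = Pi ** D"
  proof -
    have "?X ** Pi = Pi ** (P ** ?X) ** Pi" by (simp add: matrix_mul_assoc Pi2)
    also have "\<dots> = Pi ** D" by (simp add: PX matrix_mul_assoc[symmetric] Pi1)
    finally show ?thesis .
  qed
  have conj: "P ** brk ?X W ** Pi = brk D (P ** W ** Pi)" for W
  proof -
    have 1: "P ** (?X ** W) ** Pi = D ** (P ** W ** Pi)"
      by (simp add: matrix_mul_assoc PX)
    have 2: "P ** (W ** ?X) ** Pi = (P ** W ** Pi) ** D"
      by (metis matrix_mul_assoc XPi)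
    show ?thesis
      by (simp add: brk_def matrix_diff_ldistrib matrix_diff_rdistrib 1 2)
  qed
  let ?Z = "P ** phi y ** Pi"
  have "brk D (brk D ?Z) = 0"
    using conj[of "brk ?X (phi y)"] conj[of "phi y"] z
    by (metis phi_brk phi_0 times0_left times0_right)
  hence "\<forall>i j. (D $ i $ i - D $ j $ j) * ((D $ i $ i - D $ j $ j) * ?Z $ i $ j) = 0"
    by (metis brk_diag[OF D] zero_index)
  hence "\<forall>i j. (D $ i $ i - D $ j $ j) * ?Z $ i $ j = 0"
    by (metis mult_eq_0_iff)
  hence "brk D ?Z = 0" by (simp add: vec_eq_iff brk_diag[OF D])
  hence "P ** brk ?X (phi y) ** Pi = 0" by (simp add: conj)
  hence "Pi ** (P ** brk ?X (phi y) ** Pi) ** P = 0" by simp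
  hence "brk ?X (phi y) = 0"
    by (simp add: matrix_mul_assoc Pi2 Pi1 flip: matrix_mul_assoc[of _ Pi P])
  thus ?thesis by (metis phi_brk phi_eq0)
qed

end

section \<open>Fitting-type decomposition for a single operator\<close>

interpretation mv: finite_dimensional_vector_space_pair
  "smat :: 'a::field \<Rightarrow> ('a,'n::finite) sqm \<Rightarrow> ('a,'n) sqm" mbasis
  "smat :: 'a::field \<Rightarrow> ('a,'n::finite) sqm \<Rightarrow> ('a,'n) sqm" mbasis ..

lemma fitting_T:
  fixes T :: "('a::field,'n::finite) sqm \<Rightarrow> ('a,'n) sqm"
  assumes S: "mv.subspace S" and lin: "Vector_Spaces.linear smat smat T"
    and TS: "T ` S \<subseteq> S" and k: "\<And>w. w \<in> S \<Longrightarrow> T (T w) = 0 \<Longrightarrow> T w = 0"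
  shows "T ` (T ` S) = T ` S"
proof -
  have sub: "mv.subspace (T ` S)" by (rule mv.linear_subspace_image[OF lin S])
  have sub2: "mv.subspace (T ` (T ` S))" by (rule mv.linear_subspace_image[OF lin sub])
  have inj: "inj_on T (mv.span (T ` S))"
    unfolding mv.span_eq_iff[THEN iffD2, OF sub]
    using mv.linear_inj_on_iff_eq_0[OF lin sub] k by auto
  have "mv.dim (T ` (T ` S)) = mv.dim (T ` S)"
    by (rule mv.dim_image_eq[OF lin inj])
  moreover have "T ` (T ` S) \<subseteq> T ` S" using TS by auto
  ultimately show ?thesis using mv.subspace_dim_equal[OF sub2 sub] by simp
qed


lemma subalg_sub: "lie_subalg s \<Longrightarrow> mv.subspace s"
  by (simp add: lie_subalg_def)

lemma subalg_brk: "lie_subalg s \<Longrightarrow> x \<in> s \<Longrightarrow> y \<in> s \<Longrightarrow> brk x y \<in> s"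
  by (simp add: lie_subalg_def)

lemma Brk_subspace: "mv.subspace (Brk A B)"
  by (simp add: Brk_def)

lemma brk_in_Brk: "a \<in> A \<Longrightarrow> b \<in> B \<Longrightarrow> brk a b \<in> Brk A B"
  unfolding Brk_def by (rule mv.span_base) blast

lemma fitting_subspace: "mv.subspace (fitting_one h s)"
  unfolding fitting_one_def
proof (rule mv.subspace_Inter, safe)
  fix i :: nat assume "0 < i"
  then obtain j where "i = Suc j" using gr0_implies_Suc by blast
  thus "mv.subspace (iter_brk h i s)" by (simp add: Brk_subspace)
qed

lemma fitting_sub_Brk: "fitting_one h s \<subseteq> Brk h s"
proof -
  have "fitting_one h s \<subseteq> iter_brk h 1 s" unfolding fitting_one_def by auto
  thus ?thesis by simp
qed

lemma centralizer_span:
  assumes "a \<in> centralizer s X" "d \<subseteq> mv.span X"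
  shows "a \<in> centralizer s d"
proof -
  have sub: "mv.subspace {y. brk a y = 0}"
    by (rule mv.subspaceI) (simp_all add: brk_add_right brk_smat_right)
  have "X \<subseteq> {y. brk a y = 0}" using assms(1) by (auto simp: centralizer_def)
  hence "mv.span X \<subseteq> {y. brk a y = 0}" by (rule mv.span_minimal[OF _ sub])
  thus ?thesis using assms by (auto simp: centralizer_def)
qed

context ac begin

lemma brk_image_in_fitting:
  fixes s h :: "('f,'n::finite) sqm set"
  assumes sub: "lie_subalg s" and hs: "h \<subseteq> s" and xh: "x \<in> h"
    and ss: "semisimple_mat emb x"
  shows "brk x ` s \<subseteq> fitting_one h s"
proof -
  have xs: "x \<in> s" using xh hs by auto
  have TT: "brk x ` (brk x ` s) = brk x ` s"
  proof (rule fitting_T[OF subalg_sub[OF sub] linear_brk])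
    show "brk x ` s \<subseteq> s" using subalg_brk[OF sub xs] by auto
    show "brk x (brk x w) = 0 \<Longrightarrow> brk x w = 0" for w by (rule ss_brk2[OF ss])
  qed
  have "brk x ` s \<subseteq> iter_brk h i s" for i
  proof (induction i)
    case 0
    then show ?case using subalg_brk[OF sub xs] by auto
  next
    case (Suc i)
    have "brk x ` s = brk x ` (brk x ` s)" using TT by simp
    also have "\<dots> \<subseteq> brk x ` (iter_brk h i s)" using Suc by auto
    also have "\<dots> \<subseteq> iter_brk h (Suc i) s" using brk_in_Brk[OF xh] by auto
    finally show ?case .
  qed
  thus ?thesis unfolding fitting_one_def by auto
qed

lemma decomp_fin:
  fixes s h d :: "('f,'n::finite) sqm set"
  assumes sub: "lie_subalg s" and hs: "h \<subseteq> s" and dh: "d \<subseteq> h"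
    and ssd: "\<forall>x\<in>d. semisimple_mat emb x" and comm: "\<forall>x\<in>d. \<forall>y\<in>d. brk x y = 0"
    and fin: "finite X"
  shows "X \<subseteq> d \<Longrightarrow> \<forall>v\<in>s. \<exists>a\<in>centralizer s X. v - a \<in> fitting_one h s"
  using fin
proof (induction X rule: finite_induct)
  case empty
  have "0 \<in> fitting_one h s" by (rule mv.subspace_0[OF fitting_subspace])
  show ?case
  proof
    fix v assume "v \<in> s"
    hence "v \<in> centralizer s {}" by (simp add: centralizer_def)
    moreover have "v - v \<in> fitting_one h s" using \<open>0 \<in> fitting_one h s\<close> by simp
    ultimately show "\<exists>a\<in>centralizer s {}. v - a \<in> fitting_one h s" by blast
  qed
next
  case (insert x X)
  let ?Fi = "fitting_one h s"
  have xd: "x \<in> d" and Xd: "X \<subseteq> d" using insert.prems by auto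
  have xh: "x \<in> h" using xd dh by auto
  have xs: "x \<in> s" using xh hs by auto
  have ssx: "semisimple_mat emb x" using ssd xd by auto
  have ssub: "mv.subspace s" by (rule subalg_sub[OF sub])
  have TT: "brk x ` (brk x ` s) = brk x ` s"
  proof (rule fitting_T[OF ssub linear_brk])
    show "brk x ` s \<subseteq> s" using subalg_brk[OF sub xs] by auto
    show "brk x (brk x w) = 0 \<Longrightarrow> brk x w = 0" for w by (rule ss_brk2[OF ssx])
  qed
  have TF: "brk x ` s \<subseteq> ?Fi" by (rule brk_image_in_fitting[OF sub hs xh ssx])
  show ?case
  proof
    fix v assume vs: "v \<in> s"
    obtain a where a: "a \<in> centralizer s X" and z: "v - a \<in> ?Fi" using insert.IH[OF Xd] vs by auto
    have as: "a \<in> s" using a by (auto simp: centralizer_def)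
    have "brk x a \<in> brk x ` (brk x ` s)" using TT as by auto
    then obtain w where ws: "w \<in> s" and w: "brk x a = brk x (brk x w)" by auto
    define a' where "a' = a - brk x w"
    have Ta': "brk x a' = 0" by (simp add: a'_def brk_diff_right w)
    have a's: "a' \<in> s" unfolding a'_def
      by (rule mv.subspace_diff[OF ssub as subalg_brk[OF sub xs ws]])
    have cy: "brk a' y = 0" if yX: "y \<in> X" for y
    proof -
      have yd: "y \<in> d" using yX Xd by auto
      have xy: "brk x y = 0" using comm xd yd by auto
      have ay: "brk y a = 0" using a yX by (auto simp: centralizer_def brk_antisym[of y a])
      let ?q = "brk y a'"
      have q: "?q = brk x (- brk y w)"
      proof -
        have "?q = brk y a - brk y (brk x w)" by (simp only: a'_def brk_diff_right)
        also have "\<dots> = - brk y (brk x w)" by (simp only: ay diff_zero minus_zero diff_0)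
        also have "\<dots> = - brk x (brk y w)" by (simp only: brk_jacobi_comm[OF xy])
        also have "\<dots> = brk x (- brk y w)"
          using brk_smat_right[of x "-1" "brk y w"]
          by (simp add: vec_eq_iff)
        finally show ?thesis .
      qed
      have "brk x ?q = brk y (brk x a')" using brk_jacobi_comm[OF xy, of a'] by simp
      hence "brk x (brk x (- brk y w)) = 0" using Ta' q by simp
      hence "brk x (- brk y w) = 0" by (rule ss_brk2[OF ssx])
      hence "?q = 0" using q by simp
      thus ?thesis using brk_antisym[of a' y] by simp
    qed
    have "a' \<in> centralizer s (insert x X)"
      using a's cy Ta' by (auto simp: centralizer_def brk_antisym[of a' x])
    moreover have "v - a' \<in> ?Fi"
    proof -
      have e: "v - a' = (v - a) + brk x w" by (simp add: a'_def)
      have "brk x w \<in> ?Fi" using TF ws by auto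
      thus ?thesis unfolding e by (rule mv.subspace_add[OF fitting_subspace z])
    qed
    ultimately show "\<exists>a\<in>centralizer s (insert x X). v - a \<in> ?Fi" by blast
  qed
qed

lemma s_decomp:
  fixes s h d :: "('f,'n::finite) sqm set"
  assumes sub: "lie_subalg s" and hs: "h \<subseteq> s" and dh: "d \<subseteq> h"
    and ssd: "\<forall>x\<in>d. semisimple_mat emb x" and comm: "\<forall>x\<in>d. \<forall>y\<in>d. brk x y = 0"
    and hc: "h = centralizer s d" and vs: "v \<in> s"
  shows "\<exists>a\<in>h. v - a \<in> fitting_one h s"
proof -
  obtain X where Xd: "X \<subseteq> d" and ind: "mv.independent X" and dX: "d \<subseteq> mv.span X"
    using mv.basis_exists[of d] by metis
  have fin: "finite X" using mv.finiteI_independent[OF ind] .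
  obtain a where a: "a \<in> centralizer s X" and z: "v - a \<in> fitting_one h s"
    using decomp_fin[OF sub hs dh ssd comm fin Xd] vs by blast
  have "a \<in> h" using centralizer_span[OF a dX] hc by simp
  thus ?thesis using z by blast
qed

end


lemma mv_sum: "A *v sum f S = (\<Sum>i\<in>S. A *v f i)"
  for A :: "('a::field,'n::finite) sqm"
  by (induction S rule: infinite_finite_induct) (auto simp: matrix_vector_right_distrib)

lemma span_image_rep:
  fixes f :: "nat \<Rightarrow> 'a::field^'n::finite"
  assumes "y \<in> vec.span (f ` {..<k})"
  shows "\<exists>c. y = (\<Sum>i<k. c i *s f i)"
proof -
  let ?R = "{y. \<exists>c. y = (\<Sum>i<k. c i *s f i)}"
  have sub: "vec.subspace ?R"
  proof (rule vec.subspaceI)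
    show "0 \<in> ?R" by (rule CollectI, rule exI[of _ "\<lambda>_. 0"]) simp
  next
    fix x y assume "x \<in> ?R" "y \<in> ?R"
    then obtain c d where xy: "x = (\<Sum>i<k. c i *s f i)" "y = (\<Sum>i<k. d i *s f i)" by auto
    show "x + y \<in> ?R" unfolding mem_Collect_eq
      by (rule exI[of _ "\<lambda>i. c i + d i"]) (simp add: xy sum.distrib vector_sadd_rdistrib)
  next
    fix a x assume "x \<in> ?R"
    then obtain c where xc: "x = (\<Sum>i<k. c i *s f i)" by auto
    show "a *s x \<in> ?R" unfolding mem_Collect_eq
      by (rule exI[of _ "\<lambda>i. a * c i"]) (simp add: xc vec.scale_sum_right)
  qed
  have "f ` {..<k} \<subseteq> ?R"
  proof
    fix y assume "y \<in> f ` {..<k}"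
    then obtain j where j: "j < k" "y = f j" by auto
    have sj: "(\<Sum>i<k. (if i = j then 1 else 0) *s f i) = f j"
    proof -
      have "(\<Sum>i<k. (if i = j then 1 else 0) *s f i) = (\<Sum>i<k. if i = j then f j else 0)"
        by (rule sum.cong) auto
      also have "\<dots> = f j" using j(1) by simp
      finally show ?thesis .
    qed
    show "y \<in> ?R" unfolding mem_Collect_eq
      by (rule exI[of _ "\<lambda>i. if i = j then 1 else 0"]) (simp only: sj j(2))
  qed
  hence "vec.span (f ` {..<k}) \<subseteq> ?R" by (rule vec.span_minimal[OF _ sub])
  thus ?thesis using assms by auto
qed

lemma span_map:
  fixes M :: "('a::field,'n::finite) sqm"
  assumes "\<forall>x\<in>S. M *v x \<in> W" "vec.subspace W" "x \<in> vec.span S"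
  shows "M *v x \<in> W"
proof -
  have sub: "vec.subspace {x. M *v x \<in> W}"
    by (rule vec.subspaceI)
       (simp_all add: vec.subspace_0[OF assms(2)] matrix_vector_right_distrib mv_scale
         vec.subspace_add[OF assms(2)] vec.subspace_scale[OF assms(2)])
  have "vec.span S \<subseteq> {x. M *v x \<in> W}" by (rule vec.span_minimal[OF _ sub]) (use assms in auto)
  thus ?thesis using assms by auto
qed

definition kry :: "('a::field,'n::finite) sqm \<Rightarrow> 'a^'n \<Rightarrow> ('a^'n) set \<Rightarrow> nat \<Rightarrow> ('a^'n) set" where
  "kry X v U k = vec.span (U \<union> (\<lambda>i. it X i v) ` {..<k})"

lemma kry_dim:
  assumes "\<forall>j<k. it X j v \<notin> kry X v U j"
  shows "vec.dim (kry X v U k) \<ge> k"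
  using assms
proof (induction k)
  case (Suc k)
  have e: "U \<union> (\<lambda>i. it X i v) ` {..<Suc k} = insert (it X k v) (U \<union> (\<lambda>i. it X i v) ` {..<k})"
    by (auto simp: lessThan_Suc)
  have "it X k v \<notin> vec.span (U \<union> (\<lambda>i. it X i v) ` {..<k})"
    using Suc.prems by (simp add: kry_def)
  hence "vec.dim (kry X v U (Suc k)) = vec.dim (kry X v U k) + 1"
    unfolding kry_def vec.dim_span e by (simp add: vec.dim_insert)
  thus ?case using Suc by simp
qed simp

lemma krylov_stop: "\<exists>m. it X m v \<in> kry X v U m"
  for X :: "('a::field,'n::finite) sqm"
proof (rule ccontr)
  assume "\<not> ?thesis"
  hence "vec.dim (kry X v U (Suc CARD('n))) \<ge> Suc CARD('n)"
    by (intro kry_dim) auto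
  moreover have "vec.dim (kry X v U (Suc CARD('n))) \<le> CARD('n)"
    using vec.dim_subset_UNIV[of "kry X v U (Suc CARD('n))"]
    by (simp add: vec.dimension_def card_cart_basis)
  ultimately show False by simp
qed

section \<open>Polynomial evaluation at a matrix on a vector\<close>

definition peval :: "'a::field poly \<Rightarrow> ('a,'n::finite) sqm \<Rightarrow> 'a^'n \<Rightarrow> 'a^'n" where
  "peval p T w = (\<Sum>i\<le>degree p. coeff p i *s it T i w)"

lemma peval_N:
  assumes "degree p < N"
  shows "peval p T w = (\<Sum>i<N. coeff p i *s it T i w)"
  unfolding peval_def
proof (rule sum.mono_neutral_left)
  show "{..degree p} \<subseteq> {..<N}" using assms by auto
  show "\<forall>i\<in>{..<N} - {..degree p}. coeff p i *s it T i w = 0"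
    by (auto simp: coeff_eq_0)
qed simp

lemma peval_add: "peval (p + q) T w = peval p T w + peval q T w"
proof -
  let ?N = "Suc (max (degree p) (degree q))"
  have d: "degree (p + q) < ?N" using degree_add_le_max[of p q] by simp
  have dp: "degree p < ?N" and dq: "degree q < ?N" by auto
  show ?thesis
    unfolding peval_N[OF d] peval_N[OF dp] peval_N[OF dq] coeff_add vector_sadd_rdistrib sum.distrib
    by (rule refl)
qed

lemma peval_diff: "peval (p - q) T w = peval p T w - peval q T w"
proof -
  have "peval (p - q + q) T w = peval (p - q) T w + peval q T w" by (rule peval_add)
  thus ?thesis by (simp add: eq_diff_eq)
qed

lemma peval_smult: "peval (smult a p) T w = a *s peval p T w"
proof -
  let ?N = "Suc (degree p)"
  have d: "degree (smult a p) < ?N" using degree_smult_le[of a p] by simp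
  have dp: "degree p < ?N" by auto
  show ?thesis
    unfolding peval_N[OF d] peval_N[OF dp]
    by (simp add: vec.scale_sum_right)
qed

lemma peval_pCons0: "peval (pCons 0 q) T w = T *v peval q T w"
proof -
  let ?N = "Suc (Suc (degree q))"
  have d: "degree (pCons 0 q) < ?N" using degree_pCons_le[of 0 q] by simp
  have "peval (pCons 0 q) T w = (\<Sum>i<Suc (degree q). coeff q i *s it T (Suc i) w)"
    unfolding peval_N[OF d] sum.lessThan_Suc_shift by simp
  also have "\<dots> = T *v (\<Sum>i<Suc (degree q). coeff q i *s it T i w)"
    by (simp only: mv_sum mv_scale it_Suc)
  also have "\<dots> = T *v peval q T w"
    by (simp add: peval_def lessThan_Suc_atMost)
  finally show ?thesis .
qed

lemma peval_lin: "peval ([:-c, 1:] * q) T w = T *v peval q T w - c *s peval q T w"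
proof -
  have e: "[:-c, 1:] * q = smult (-c) q + pCons 0 q" by simp
  show ?thesis unfolding e peval_add peval_smult peval_pCons0
    by (simp add: vec.scale_minus_left)
qed

lemma peval_0[simp]: "peval 0 T w = 0"
  by (simp add: peval_def)

lemma peval_const: "degree p = 0 \<Longrightarrow> peval p T w = coeff p 0 *s w"
  by (simp add: peval_def)

lemma peval_monom: "peval (monom a i) T w = a *s it T i w"
proof (cases "a = 0")
  case False
  have "peval (monom a i) T w = (\<Sum>j\<le>i. (if i = j then a else 0) *s it T j w)"
    by (simp add: peval_def degree_monom_eq[OF False])
  also have "\<dots> = (\<Sum>j\<le>i. if i = j then a *s it T j w else 0)"
    by (rule sum.cong) auto
  also have "\<dots> = a *s it T i w" by simp
  finally show ?thesis .
qed simp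

lemma peval_sum: "peval (\<Sum>j\<in>S. P j) T w = (\<Sum>j\<in>S. peval (P j) T w)"
  by (induction S rule: infinite_finite_induct) (auto simp: peval_add)

lemma it_in: "vec.subspace W \<Longrightarrow> w \<in> W \<Longrightarrow> \<forall>x\<in>W. T *v x \<in> W \<Longrightarrow> it T i w \<in> W"
  by (induction i) auto

lemma peval_in: "vec.subspace W \<Longrightarrow> w \<in> W \<Longrightarrow> \<forall>x\<in>W. T *v x \<in> W \<Longrightarrow> peval p T w \<in> W"
  unfolding peval_def
  by (intro vec.subspace_sum vec.subspace_scale it_in) auto

context ac begin

lemma eig_poly:
  fixes T :: "('k,'n::finite) sqm"
  assumes U: "vec.subspace U" and W: "vec.subspace W" and TW: "\<forall>x\<in>W. T *v x \<in> W"
  shows "p \<noteq> 0 \<Longrightarrow> w \<in> W \<Longrightarrow> w \<notin> U \<Longrightarrow> peval p T w \<in> U \<Longrightarrow>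
    \<exists>w'\<in>W. w' \<notin> U \<and> (\<exists>c. T *v w' - c *s w' \<in> U)"
proof (induction "degree p" arbitrary: p rule: less_induct)
  case less
  show ?case
  proof (cases "degree p = 0")
    case True
    have a: "coeff p 0 \<noteq> 0" using less.prems(1) True by (metis leading_coeff_0_iff)
    have "coeff p 0 *s w \<in> U" using less.prems(4) by (simp add: peval_const[OF True])
    hence "inverse (coeff p 0) *s (coeff p 0 *s w) \<in> U" by (rule vec.subspace_scale[OF U])
    hence "w \<in> U" using a by simp
    thus ?thesis using less.prems(3) by simp
  next
    case False
    then obtain c where "poly p c = 0" using alg_closed by blast
    then obtain q where pq: "p = [:-c, 1:] * q" using poly_eq_0_iff_dvd by (metis dvdE)
    have q0: "q \<noteq> 0" using less.prems(1) pq by auto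
    have dq: "degree q < degree p" unfolding pq using q0 by (subst degree_mult_eq) auto
    let ?w1 = "peval q T w"
    have w1W: "?w1 \<in> W" by (rule peval_in[OF W less.prems(2) TW])
    show ?thesis
    proof (cases "?w1 \<in> U")
      case True
      show ?thesis by (rule less.hyps[OF dq q0 less.prems(2,3) True])
    next
      case False
      have "T *v ?w1 - c *s ?w1 \<in> U" using less.prems(4) unfolding pq peval_lin .
      thus ?thesis using w1W False by blast
    qed
  qed
qed

lemma eig_mod:
  fixes T :: "('k,'n::finite) sqm"
  assumes U: "vec.subspace U" and W: "vec.subspace W" and TW: "\<forall>x\<in>W. T *v x \<in> W"
    and w0: "w0 \<in> W" "w0 \<notin> U"
  shows "\<exists>w\<in>W. w \<notin> U \<and> (\<exists>c. T *v w - c *s w \<in> U)"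
proof -
  obtain m where m: "it T m w0 \<in> kry T w0 U m" using krylov_stop by blast
  then obtain u y where u: "u \<in> vec.span U" and y: "y \<in> vec.span ((\<lambda>i. it T i w0) ` {..<m})"
    and e: "it T m w0 = u + y"
    unfolding kry_def vec.span_Un by blast
  obtain c where yc: "y = (\<Sum>i<m. c i *s it T i w0)" using span_image_rep[OF y] by blast
  define p where "p = monom 1 m - (\<Sum>i<m. monom (c i) i)"
  have "coeff p m = 1" by (simp add: p_def coeff_sum)
  hence p0: "p \<noteq> 0" by auto
  have "peval p T w0 = it T m w0 - y"
    by (simp add: p_def peval_diff peval_sum peval_monom yc)
  also have "\<dots> = u" using e by simp
  finally have "peval p T w0 \<in> U" using u vec.span_eq_iff[THEN iffD2, OF U] by simp
  thus ?thesis using eig_poly[OF U W TW p0 w0] by blast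
qed

end


lemma brk_mv: "brk A B *v w = A *v (B *v w) - B *v (A *v w)"
  for A :: "('a::field,'n::finite) sqm"
  by (simp add: brk_def matrix_vector_mult_diff_rdistrib matrix_vector_mul_assoc)

locale trace_setup =
  fixes X :: "('a::field,'n::finite) sqm" and Ys :: "('a,'n) sqm set"
    and U :: "('a^'n) set" and v0 :: "'a^'n"
  assumes U: "vec.subspace U" and v0: "v0 \<notin> U"
    and XU: "\<forall>u\<in>U. X *v u \<in> U" and YU: "\<forall>Y\<in>Ys. \<forall>u\<in>U. Y *v u \<in> U"
    and XY: "\<forall>Y\<in>Ys. brk X Y \<in> Ys"
    and wt: "\<forall>Y\<in>Ys. \<exists>c. Y *v v0 - c *s v0 \<in> U"
    and char0: "\<And>k. k > 0 \<Longrightarrow> (of_nat k :: 'a) \<noteq> 0"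
begin

abbreviation e where "e i \<equiv> it X i v0"
definition mu where "mu Y = (SOME c. Y *v v0 - c *s v0 \<in> U)"
abbreviation KK where "KK k \<equiv> kry X v0 U k"
definition m where "m = (LEAST m. e m \<in> KK m)"

lemma mu_spec: "Y \<in> Ys \<Longrightarrow> Y *v v0 - mu Y *s v0 \<in> U"
  unfolding mu_def by (rule someI_ex) (use wt in blast)

lemma K_sub: "vec.subspace (KK k)" by (simp add: kry_def)

lemma U_K: "U \<subseteq> KK k" unfolding kry_def using vec.span_superset by blast

lemma e_K: "i < k \<Longrightarrow> e i \<in> KK k" unfolding kry_def by (rule vec.span_base) auto

lemma K_mono: "j \<le> k \<Longrightarrow> KK j \<subseteq> KK k" unfolding kry_def by (rule vec.span_mono) auto

lemma em: "e m \<in> KK m" unfolding m_def by (rule LeastI_ex) (rule krylov_stop)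

lemma notin: "j < m \<Longrightarrow> e j \<notin> KK j" unfolding m_def by (rule not_less_Least)

lemma K0: "KK 0 = U" unfolding kry_def using U by simp

lemma m_pos: "m > 0"
proof (rule ccontr)
  assume "\<not> m > 0"
  hence "m = 0" by simp
  hence "v0 \<in> KK 0" using em by simp
  thus False using v0 K0 by simp
qed

lemma X_K: "u \<in> KK k \<Longrightarrow> X *v u \<in> KK (Suc k)"
  unfolding kry_def[of X v0 U k]
proof (rule span_map[OF _ K_sub])
  show "\<forall>x\<in>U \<union> (\<lambda>i. e i) ` {..<k}. X *v x \<in> KK (Suc k)"
  proof
    fix x assume "x \<in> U \<union> (\<lambda>i. e i) ` {..<k}"
    then consider "x \<in> U" | i where "i < k" "x = e i" by auto
    thus "X *v x \<in> KK (Suc k)"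
    proof cases
      case 1 thus ?thesis using XU U_K by blast
    next
      case 2
      have "X *v x = e (Suc i)" using 2 by simp
      thus ?thesis using e_K[of "Suc i" "Suc k"] 2 by simp
    qed
  qed
qed

lemma claimA: "Y \<in> Ys \<Longrightarrow> Y *v e k - mu Y *s e k \<in> KK k"
proof (induction k arbitrary: Y)
  case 0
  thus ?case using mu_spec U_K by auto
next
  case (Suc k)
  let ?Z = "brk X Y"
  have Z: "?Z \<in> Ys" using XY Suc.prems by blast
  let ?r = "Y *v e k - mu Y *s e k" and ?r' = "?Z *v e k - mu ?Z *s e k"
  have r: "?r \<in> KK k" by (rule Suc.IH[OF Suc.prems])
  have r': "?r' \<in> KK k" by (rule Suc.IH[OF Z])
  have eq: "Y *v e (Suc k) - mu Y *s e (Suc k) = X *v ?r - ?r' - mu ?Z *s e k"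
    by (simp add: brk_mv matrix_vector_mult_diff_distrib mv_scale)
  have "X *v ?r \<in> KK (Suc k)" by (rule X_K[OF r])
  moreover have "?r' \<in> KK (Suc k)" using r' K_mono[of k "Suc k"] by auto
  moreover have "mu ?Z *s e k \<in> KK (Suc k)" by (rule vec.subspace_scale[OF K_sub e_K]) simp
  ultimately show ?case unfolding eq
    by (intro vec.subspace_diff[OF K_sub, of "X *v ?r - ?r'"] vec.subspace_diff[OF K_sub, of "X *v ?r"])
qed

lemma X_pres: "u \<in> KK m \<Longrightarrow> X *v u \<in> KK m"
proof -
  assume u: "u \<in> KK m"
  have "\<forall>x\<in>U \<union> (\<lambda>i. e i) ` {..<m}. X *v x \<in> KK m"
  proof
    fix x assume "x \<in> U \<union> (\<lambda>i. e i) ` {..<m}"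
    then consider "x \<in> U" | i where "i < m" "x = e i" by auto
    thus "X *v x \<in> KK m"
    proof cases
      case 1 thus ?thesis using XU U_K by blast
    next
      case 2
      have ex: "X *v x = e (Suc i)" using 2 by simp
      show ?thesis
      proof (cases "Suc i < m")
        case True show ?thesis by (subst ex) (rule e_K[OF True])
      next
        case False
        hence "Suc i = m" using 2 by simp
        show ?thesis by (subst ex) (simp only: \<open>Suc i = m\<close> em)
      qed
    qed
  qed
  thus ?thesis using span_map[OF _ K_sub u[unfolded kry_def]] by blast
qed

lemma Y_pres: "Y \<in> Ys \<Longrightarrow> u \<in> KK m \<Longrightarrow> Y *v u \<in> KK m"
proof -
  assume Y: "Y \<in> Ys" and u: "u \<in> KK m"
  have "\<forall>x\<in>U \<union> (\<lambda>i. e i) ` {..<m}. Y *v x \<in> KK m"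
  proof
    fix x assume "x \<in> U \<union> (\<lambda>i. e i) ` {..<m}"
    then consider "x \<in> U" | i where "i < m" "x = e i" by auto
    thus "Y *v x \<in> KK m"
    proof cases
      case 1 thus ?thesis using YU Y U_K by blast
    next
      case 2
      have a: "Y *v e i - mu Y *s e i \<in> KK m" using claimA[OF Y, of i] K_mono[of i m] 2 by auto
      have b: "mu Y *s e i \<in> KK m" using vec.subspace_scale[OF K_sub e_K[OF 2(1)]] by blast
      have "Y *v x = (Y *v e i - mu Y *s e i) + mu Y *s e i" using 2 by simp
      thus ?thesis using vec.subspace_add[OF K_sub a b] by simp
    qed
  qed
  thus ?thesis using span_map[OF _ K_sub u[unfolded kry_def]] by blast
qed

lemma rep: "w \<in> KK k \<Longrightarrow> \<exists>c. w - (\<Sum>i<k. c i *s e i) \<in> U"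
proof -
  assume "w \<in> KK k"
  then obtain a b where a: "a \<in> vec.span U" and b: "b \<in> vec.span ((\<lambda>i. e i) ` {..<k})"
    and w: "w = a + b"
    unfolding kry_def vec.span_Un by blast
  obtain c where bc: "b = (\<Sum>i<k. c i *s e i)" using span_image_rep[OF b] by blast
  have "w - (\<Sum>i<k. c i *s e i) = a" using w bc by simp
  thus ?thesis using a vec.span_eq_iff[THEN iffD2, OF U] by auto
qed

lemma sum_e_K: "(\<Sum>i<k. c i *s e i) \<in> KK k"
  by (intro vec.subspace_sum[OF K_sub] vec.subspace_scale[OF K_sub] e_K) auto

lemma indep: "k \<le> m \<Longrightarrow> (\<Sum>i<k. c i *s e i) \<in> U \<Longrightarrow> i < k \<Longrightarrow> c i = 0"
proof (induction k arbitrary: i)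
  case 0 thus ?case by simp
next
  case (Suc k)
  have S: "(\<Sum>i<k. c i *s e i) + c k *s e k \<in> U" using Suc.prems(2) by simp
  have ck: "c k = 0"
  proof (rule ccontr)
    assume ck: "c k \<noteq> 0"
    have ee: "e k = inverse (c k) *s (((\<Sum>i<k. c i *s e i) + c k *s e k) - (\<Sum>i<k. c i *s e i))"
      using ck by simp
    have "((\<Sum>i<k. c i *s e i) + c k *s e k) - (\<Sum>i<k. c i *s e i) \<in> KK k"
      using S U_K sum_e_K by (intro vec.subspace_diff[OF K_sub]) auto
    hence "inverse (c k) *s (((\<Sum>i<k. c i *s e i) + c k *s e k) - (\<Sum>i<k. c i *s e i)) \<in> KK k"
      by (rule vec.subspace_scale[OF K_sub])
    hence "e k \<in> KK k" by (simp only: ee[symmetric])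
    thus False using notin[of k] Suc.prems(1) by simp
  qed
  have S': "(\<Sum>i<k. c i *s e i) \<in> U" using S ck by simp
  show ?case
  proof (cases "i = k")
    case True thus ?thesis using ck by simp
  next
    case False
    thus ?thesis using Suc.IH[OF _ S'] Suc.prems by simp
  qed
qed

lemma uniq:
  assumes "w - (\<Sum>i<m. c i *s e i) \<in> U" "w - (\<Sum>i<m. d i *s e i) \<in> U" "i < m"
  shows "c i = d i"
proof -
  have "(w - (\<Sum>i<m. d i *s e i)) - (w - (\<Sum>i<m. c i *s e i)) \<in> U"
    by (rule vec.subspace_diff[OF U assms(2,1)])
  moreover have "(w - (\<Sum>i<m. d i *s e i)) - (w - (\<Sum>i<m. c i *s e i)) = (\<Sum>i<m. (c i - d i) *s e i)"
    by (simp add: vector_sub_rdistrib sum_subtractf)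
  ultimately have "(\<Sum>i<m. (c i - d i) *s e i) \<in> U" by simp
  hence "c i - d i = 0" by (rule indep[OF order.refl _ assms(3)])
  thus ?thesis by simp
qed

definition crd where "crd w = (SOME c. w - (\<Sum>i<m. c i *s e i) \<in> U)"

lemma crd_spec: "w \<in> KK m \<Longrightarrow> w - (\<Sum>i<m. crd w i *s e i) \<in> U"
proof -
  assume w: "w \<in> KK m"
  show ?thesis unfolding crd_def
    by (rule someI_ex[where P = "\<lambda>c. w - (\<Sum>i<m. c i *s e i) \<in> U"]) (rule rep[OF w])
qed

lemma crd_eq: "w \<in> KK m \<Longrightarrow> w - (\<Sum>i<m. c i *s e i) \<in> U \<Longrightarrow> i < m \<Longrightarrow> crd w i = c i"
proof -
  assume w: "w \<in> KK m" and c: "w - (\<Sum>i<m. c i *s e i) \<in> U" and i: "i < m"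
  show ?thesis by (rule uniq[OF crd_spec[OF w] c i])
qed

definition cf where "cf M i j = crd (M *v e j) i"

lemma cf_spec: "(\<forall>u\<in>KK m. M *v u \<in> KK m) \<Longrightarrow> j < m \<Longrightarrow> M *v e j - (\<Sum>i<m. cf M i j *s e i) \<in> U"
  unfolding cf_def by (rule crd_spec) (use e_K in blast)

end


context trace_setup begin

lemma cf_mult:
  assumes P1: "\<forall>u\<in>KK m. M1 *v u \<in> KK m" and U1: "\<forall>u\<in>U. M1 *v u \<in> U"
    and P2: "\<forall>u\<in>KK m. M2 *v u \<in> KK m" and i: "i < m" and j: "j < m"
  shows "cf (M1 ** M2) i j = (\<Sum>k<m. cf M1 i k * cf M2 k j)"
proof -
  define a where "a k = cf M2 k j" for k
  define b where "b i k = cf M1 i k" for i k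
  define u2 where "u2 = M2 *v e j - (\<Sum>k<m. a k *s e k)"
  define u1 where "u1 k = M1 *v e k - (\<Sum>i<m. b i k *s e i)" for k
  have u2U: "u2 \<in> U" unfolding u2_def a_def by (rule cf_spec[OF P2 j])
  have u1U: "k < m \<Longrightarrow> u1 k \<in> U" for k unfolding u1_def b_def by (rule cf_spec[OF P1])
  have 1: "M1 *v (\<Sum>k<m. a k *s e k) = (\<Sum>k<m. a k *s (M1 *v e k))"
    by (simp add: mv_sum mv_scale)
  have 2: "(\<Sum>k<m. a k *s (\<Sum>i<m. b i k *s e i)) = (\<Sum>i<m. (\<Sum>k<m. b i k * a k) *s e i)"
  proof -
    have "(\<Sum>k<m. a k *s (\<Sum>i<m. b i k *s e i)) = (\<Sum>k<m. \<Sum>i<m. (b i k * a k) *s e i)"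
      by (simp add: vec.scale_sum_right mult.commute)
    also have "\<dots> = (\<Sum>i<m. \<Sum>k<m. (b i k * a k) *s e i)" by (rule sum.swap)
    also have "\<dots> = (\<Sum>i<m. (\<Sum>k<m. b i k * a k) *s e i)"
      by (simp add: vec.scale_sum_left)
    finally show ?thesis .
  qed
  have 3: "(\<Sum>k<m. a k *s u1 k) = (\<Sum>k<m. a k *s (M1 *v e k)) - (\<Sum>k<m. a k *s (\<Sum>i<m. b i k *s e i))"
    unfolding u1_def by (simp add: vec.scale_right_diff_distrib sum_subtractf)
  have 4: "M1 *v u2 = (M1 ** M2) *v e j - M1 *v (\<Sum>k<m. a k *s e k)"
    unfolding u2_def by (simp add: matrix_vector_mult_diff_distrib matrix_vector_mul_assoc)
  have key: "(M1 ** M2) *v e j - (\<Sum>i<m. (\<Sum>k<m. b i k * a k) *s e i) = M1 *v u2 + (\<Sum>k<m. a k *s u1 k)"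
    unfolding 3 4 1 2 by simp
  have "M1 *v u2 + (\<Sum>k<m. a k *s u1 k) \<in> U"
    using U1 u2U u1U by (intro vec.subspace_add[OF U] vec.subspace_sum[OF U] vec.subspace_scale[OF U]) auto
  hence mem: "(M1 ** M2) *v e j - (\<Sum>i<m. (\<Sum>k<m. b i k * a k) *s e i) \<in> U" unfolding key .
  have inK: "(M1 ** M2) *v e j \<in> KK m"
    using P1 P2 e_K[OF j] by (simp add: matrix_vector_mul_assoc[symmetric])
  show ?thesis using crd_eq[OF inK mem i] by (simp add: cf_def a_def b_def)
qed

lemma cf_diff:
  assumes P1: "\<forall>u\<in>KK m. M1 *v u \<in> KK m" and P2: "\<forall>u\<in>KK m. M2 *v u \<in> KK m"
    and i: "i < m" and j: "j < m"
  shows "cf (M1 - M2) i j = cf M1 i j - cf M2 i j"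
proof -
  have "(M1 *v e j - (\<Sum>i<m. cf M1 i j *s e i)) - (M2 *v e j - (\<Sum>i<m. cf M2 i j *s e i)) \<in> U"
    by (rule vec.subspace_diff[OF U cf_spec[OF P1 j] cf_spec[OF P2 j]])
  moreover have "(M1 *v e j - (\<Sum>i<m. cf M1 i j *s e i)) - (M2 *v e j - (\<Sum>i<m. cf M2 i j *s e i))
     = (M1 - M2) *v e j - (\<Sum>i<m. (cf M1 i j - cf M2 i j) *s e i)"
    by (simp add: matrix_vector_mult_diff_rdistrib vector_sub_rdistrib sum_subtractf)
  ultimately have mem: "(M1 - M2) *v e j - (\<Sum>i<m. (cf M1 i j - cf M2 i j) *s e i) \<in> U" by simp
  have inK: "(M1 - M2) *v e j \<in> KK m"
    using P1 P2 e_K[OF j] by (simp add: matrix_vector_mult_diff_rdistrib vec.subspace_diff[OF K_sub])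
  show ?thesis using crd_eq[OF inK mem i] by (simp add: cf_def)
qed

lemma cf_diag:
  assumes Z: "Z \<in> Ys" and j: "j < m"
  shows "cf Z j j = mu Z"
proof -
  obtain c where c: "(Z *v e j - mu Z *s e j) - (\<Sum>i<j. c i *s e i) \<in> U"
    using rep[OF claimA[OF Z]] by blast
  define c' where "c' i = (if i < j then c i else if i = j then mu Z else 0)" for i
  have sumeq: "(\<Sum>i<m. c' i *s e i) = (\<Sum>i<j. c i *s e i) + mu Z *s e j"
  proof -
    have "(\<Sum>i<m. c' i *s e i) = (\<Sum>i<Suc j. c' i *s e i)"
    proof (rule sum.mono_neutral_right)
      show "{..<Suc j} \<subseteq> {..<m}" using j by auto
      show "\<forall>i\<in>{..<m} - {..<Suc j}. c' i *s e i = 0" by (auto simp: c'_def)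
    qed simp
    also have "\<dots> = (\<Sum>i<j. c' i *s e i) + c' j *s e j" by simp
    also have "(\<Sum>i<j. c' i *s e i) = (\<Sum>i<j. c i *s e i)"
      by (rule sum.cong) (auto simp: c'_def)
    finally show ?thesis by (simp add: c'_def)
  qed
  have mem: "Z *v e j - (\<Sum>i<m. c' i *s e i) \<in> U"
    using c unfolding sumeq by (simp add: algebra_simps)
  have inK: "Z *v e j \<in> KK m" by (rule Y_pres[OF Z e_K[OF j]])
  show ?thesis using crd_eq[OF inK mem j] by (simp add: cf_def c'_def)
qed

theorem weight_brk_zero:
  assumes Y: "Y \<in> Ys"
  shows "brk X Y *v v0 \<in> U"
proof -
  let ?Z = "brk X Y"
  have Z: "?Z \<in> Ys" using XY Y by blast
  have PX: "\<forall>u\<in>KK m. X *v u \<in> KK m" using X_pres by blast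
  have PY: "\<forall>u\<in>KK m. Y *v u \<in> KK m" using Y_pres[OF Y] by blast
  have UX: "\<forall>u\<in>U. X *v u \<in> U" by (rule XU)
  have UY: "\<forall>u\<in>U. Y *v u \<in> U" using YU Y by blast
  have PXY: "\<forall>u\<in>KK m. (X ** Y) *v u \<in> KK m" using PX PY by (simp add: matrix_vector_mul_assoc[symmetric])
  have PYX: "\<forall>u\<in>KK m. (Y ** X) *v u \<in> KK m" using PX PY by (simp add: matrix_vector_mul_assoc[symmetric])
  have cfZ: "cf ?Z j j = (\<Sum>k<m. cf X j k * cf Y k j) - (\<Sum>k<m. cf Y j k * cf X k j)" if j: "j < m" for j
    unfolding brk_def cf_diff[OF PXY PYX j j] cf_mult[OF PX UX PY j j] cf_mult[OF PY UY PX j j] ..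
  have "(\<Sum>j<m. cf ?Z j j) = (\<Sum>j<m. \<Sum>k<m. cf X j k * cf Y k j) - (\<Sum>j<m. \<Sum>k<m. cf Y j k * cf X k j)"
    by (simp add: cfZ sum_subtractf)
  also have "(\<Sum>j<m. \<Sum>k<m. cf Y j k * cf X k j) = (\<Sum>j<m. \<Sum>k<m. cf X j k * cf Y k j)"
    by (subst sum.swap) (simp add: mult.commute)
  finally have "(\<Sum>j<m. cf ?Z j j) = 0" by simp
  moreover have "(\<Sum>j<m. cf ?Z j j) = of_nat m * mu ?Z"
    by (simp add: cf_diag[OF Z])
  ultimately have "of_nat m * mu ?Z = 0" by simp
  hence "mu ?Z = 0" using char0[OF m_pos] by simp
  thus ?thesis using mu_spec[OF Z] by simp
qed

end


lemma smat_mv: "smat a M *v w = a *s (M *v w)"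
  by (simp add: vec_eq_iff matrix_vector_mult_def sum_distrib_left mult.assoc)

lemma Brk_mono: "A \<subseteq> A' \<Longrightarrow> B \<subseteq> B' \<Longrightarrow> Brk A B \<subseteq> Brk A' B'"
  unfolding Brk_def by (rule mv.span_mono) blast

lemma derived_mono: "A \<subseteq> B \<Longrightarrow> derived_series A k \<subseteq> derived_series B k"
proof (induction k)
  case (Suc k)
  thus ?case using Brk_mono by simp
qed simp

lemma derived_0: "mv.subspace A \<Longrightarrow> 0 \<in> derived_series A k"
  by (cases k) (auto simp: mv.subspace_0 Brk_def mv.span_zero)

lemma solvable_sub: "lie_solvable L \<Longrightarrow> I \<subseteq> L \<Longrightarrow> mv.subspace I \<Longrightarrow> lie_solvable I"
proof -
  assume "lie_solvable L" and IL: "I \<subseteq> L" and I: "mv.subspace I"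
  then obtain k where k: "derived_series L k = {0}" by (auto simp: lie_solvable_def)
  have "derived_series I k \<subseteq> {0}" using derived_mono[OF IL, of k] k by simp
  moreover have "0 \<in> derived_series I k" by (rule derived_0[OF I])
  ultimately have "derived_series I k = {0}" by blast
  thus "lie_solvable I" by (auto simp: lie_solvable_def)
qed

lemma Brk_sub: "lie_subalg L \<Longrightarrow> Brk L L \<subseteq> L"
  unfolding Brk_def lie_subalg_def by (rule mv.span_minimal) auto

lemma derived_const: "Brk L L = L \<Longrightarrow> derived_series L k = L"
  by (induction k) auto

context ac begin

lemma lie_rel:
  fixes L :: "('f,'n::finite) sqm set" and U V :: "('k^'n) set"
  assumes "lie_subalg L" "lie_solvable L" "vec.subspace U" "vec.subspace V" "U \<subseteq> V"
    "v1 \<in> V" "v1 \<notin> U"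
    "\<forall>x\<in>L. \<forall>u\<in>U. phi x *v u \<in> U" "\<forall>x\<in>L. \<forall>u\<in>V. phi x *v u \<in> V"
  shows "\<exists>v\<in>V. v \<notin> U \<and> (\<forall>x\<in>L. \<exists>c. phi x *v v - c *s v \<in> U)"
  using assms
proof (induction "mv.dim L" arbitrary: L U V v1 rule: less_induct)
  case less
  note subL = less.prems(1) and solL = less.prems(2) and U = less.prems(3) and V = less.prems(4)
    and UV = less.prems(5) and v1 = less.prems(6,7) and LU = less.prems(8) and LV = less.prems(9)
  have Ls: "mv.subspace L" using subL by (simp add: lie_subalg_def)
  show ?case
  proof (cases "L \<subseteq> {0}")
    case True
    have "\<forall>x\<in>L. phi x *v v1 - 0 *s v1 \<in> U" using True vec.subspace_0[OF U] by auto
    thus ?thesis using v1 by blast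
  next
    case False
    let ?D = "Brk L L"
    have DL: "?D \<subseteq> L" by (rule Brk_sub[OF subL])
    have DneL: "?D \<noteq> L"
    proof
      assume "?D = L"
      hence "\<forall>k. derived_series L k = L" using derived_const by blast
      thus False using solL False by (auto simp: lie_solvable_def)
    qed
    obtain BD where BD: "BD \<subseteq> ?D" "mv.independent BD" "?D \<subseteq> mv.span BD" "card BD = mv.dim ?D"
      by (rule mv.basis_exists)
    have BDL: "BD \<subseteq> L" using BD(1) DL by (rule order.trans)
    obtain BL where BL: "BD \<subseteq> BL" "BL \<subseteq> L" "mv.independent BL" "L \<subseteq> mv.span BL"
      by (rule mv.maximal_independent_subset_extend[OF BDL BD(2)])
    have Dsub: "mv.subspace ?D" by (rule Brk_subspace)
    obtain z where z: "z \<in> BL" "z \<notin> BD"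
    proof -
      have "\<not> BL \<subseteq> BD"
      proof
        assume BLD: "BL \<subseteq> BD"
        have "L \<subseteq> mv.span BL" by (rule BL(4))
        also have "\<dots> \<subseteq> mv.span BD" using BLD by (rule mv.span_mono)
        also have "\<dots> \<subseteq> ?D" by (rule mv.span_minimal[OF BD(1) Dsub])
        finally have "L \<subseteq> ?D" .
        thus False using DL DneL by blast
      qed
      thus ?thesis using that by blast
    qed
    define I where "I = mv.span (BL - {z})"
    have Isub: "mv.subspace I" by (simp add: I_def)
    have IL: "I \<subseteq> L" unfolding I_def
      using mv.span_minimal[OF _ Ls] BL(2) by blast
    have DI: "?D \<subseteq> I" unfolding I_def
      using BD(3) mv.span_mono[of BD "BL - {z}"] BL(1) z(2) by blast
    have zI: "z \<notin> I"
    proof -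
      have "insert z (BL - {z}) = BL" using z(1) by auto
      hence "mv.independent (insert z (BL - {z}))" using BL(3) by simp
      thus ?thesis unfolding I_def mv.independent_insert by simp
    qed
    have zL: "z \<in> L" using z(1) BL(2) by auto
    have decomp: "\<exists>y\<in>I. \<exists>k. x = y + smat k z" if xL: "x \<in> L" for x
    proof -
      have "insert z (BL - {z}) = BL" using z(1) by auto
      hence "x \<in> mv.span (insert z (BL - {z}))" using xL BL(4) by auto
      then obtain k where "x - smat k z \<in> I" unfolding I_def mv.span_breakdown_eq by blast
      thus ?thesis by (intro bexI[of _ "x - smat k z"] exI[of _ k]) auto
    qed
    have dimI: "mv.dim I < mv.dim L"
    proof (rule mv.dim_psubset)
      have e1: "mv.span I = I" by (rule mv.span_eq_iff[THEN iffD2, OF Isub])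
      have e2: "mv.span L = L" by (rule mv.span_eq_iff[THEN iffD2, OF Ls])
      show "mv.span I \<subset> mv.span L" unfolding e1 e2 using IL zI zL by blast
    qed
    have subI: "lie_subalg I"
      unfolding lie_subalg_def using Isub DI IL brk_in_Brk by blast
    have solI: "lie_solvable I" by (rule solvable_sub[OF solL IL Isub])
    have IU: "\<forall>x\<in>I. \<forall>u\<in>U. phi x *v u \<in> U" using LU IL by blast
    have IV: "\<forall>x\<in>I. \<forall>u\<in>V. phi x *v u \<in> V" using LV IL by blast
    obtain v0 where v0: "v0 \<in> V" "v0 \<notin> U" and wt: "\<forall>y\<in>I. \<exists>c. phi y *v v0 - c *s v0 \<in> U"
      using less.hyps[OF dimI subI solI U V UV v1 IU IV] by blast
    define lam where "lam y = (SOME c. phi y *v v0 - c *s v0 \<in> U)" for y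
    have lam: "phi y *v v0 - lam y *s v0 \<in> U" if "y \<in> I" for y
      unfolding lam_def by (rule someI_ex[where P = "\<lambda>c. phi y *v v0 - c *s v0 \<in> U"]) (use wt that in blast)
    have lam_uniq: "c = lam y" if "y \<in> I" "phi y *v v0 - c *s v0 \<in> U" for y c
    proof (rule ccontr)
      assume ne: "c \<noteq> lam y"
      have "(phi y *v v0 - c *s v0) - (phi y *v v0 - lam y *s v0) \<in> U"
        by (rule vec.subspace_diff[OF U that(2) lam[OF that(1)]])
      hence "(lam y - c) *s v0 \<in> U" by (simp add: vector_sub_rdistrib)
      hence "inverse (lam y - c) *s ((lam y - c) *s v0) \<in> U" by (rule vec.subspace_scale[OF U])
      moreover have nz: "lam y - c \<noteq> 0" using ne by simp
      moreover have "inverse (lam y - c) *s ((lam y - c) *s v0) = v0"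
        by (simp only: vec.scale_scale left_inverse[OF nz] vec.scale_one)
      ultimately have "v0 \<in> U" by simp
      thus False using v0 by simp
    qed
    have lam_brk: "lam (brk x y) = 0" if xL: "x \<in> L" and yI: "y \<in> I" for x y
    proof -
      interpret ts: trace_setup "phi x" "phi ` I" U v0
      proof
        show "vec.subspace U" by (rule U)
        show "v0 \<notin> U" by (rule v0(2))
        show "\<forall>u\<in>U. phi x *v u \<in> U" using LU xL by blast
        show "\<forall>Y\<in>phi ` I. \<forall>u\<in>U. Y *v u \<in> U" using IU by blast
        show "\<forall>Y\<in>phi ` I. brk (phi x) Y \<in> phi ` I"
        proof
          fix Y assume "Y \<in> phi ` I"
          then obtain y' where y': "y' \<in> I" "Y = phi y'" by blast
          have "brk x y' \<in> I" using DI brk_in_Brk[OF xL] y' IL by blast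
          hence "phi (brk x y') \<in> phi ` I" by (rule imageI)
          thus "brk (phi x) Y \<in> phi ` I" using y' by simp
        qed
        show "\<forall>Y\<in>phi ` I. \<exists>c. Y *v v0 - c *s v0 \<in> U" using wt by blast
        show "(of_nat k :: 'k) \<noteq> 0" if "0 < k" for k using that K_char0 by simp
      qed
      have "brk (phi x) (phi y) *v v0 \<in> U" by (rule ts.weight_brk_zero) (use yI in blast)
      hence mem: "phi (brk x y) *v v0 - 0 *s v0 \<in> U" by simp
      have bI: "brk x y \<in> I" using DI brk_in_Brk[OF xL] yI IL by blast
      show ?thesis using lam_uniq[OF bI mem] by simp
    qed
    define W where "W = {w \<in> V. \<forall>y\<in>I. phi y *v w - lam y *s w \<in> U}"
    have Wsub: "vec.subspace W"
    proof (rule vec.subspaceI)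
      show "0 \<in> W" using vec.subspace_0[OF U] vec.subspace_0[OF V] by (simp add: W_def)
    next
      fix a b assume a: "a \<in> W" and b: "b \<in> W"
      show "a + b \<in> W" unfolding W_def
      proof safe
        show "a + b \<in> V" using a b vec.subspace_add[OF V] by (auto simp: W_def)
        fix y assume y: "y \<in> I"
        have mem: "(phi y *v a - lam y *s a) + (phi y *v b - lam y *s b) \<in> U"
          using a b y by (intro vec.subspace_add[OF U]) (auto simp: W_def)
        have eq: "phi y *v (a + b) - lam y *s (a + b)
            = (phi y *v a - lam y *s a) + (phi y *v b - lam y *s b)"
          by (simp add: matrix_vector_right_distrib vec.scale_right_distrib)
        show "phi y *v (a + b) - lam y *s (a + b) \<in> U" unfolding eq by (rule mem)
      qed
    next
      fix c a assume a: "a \<in> W"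
      show "c *s a \<in> W" unfolding W_def
      proof (safe)
        show "c *s a \<in> V" using a vec.subspace_scale[OF V] by (auto simp: W_def)
        fix y assume "y \<in> I"
        hence m1: "phi y *v a - lam y *s a \<in> U" using a by (auto simp: W_def)
        have mem: "c *s (phi y *v a - lam y *s a) \<in> U" by (rule vec.subspace_scale[OF U m1])
        have eq: "phi y *v (c *s a) - lam y *s (c *s a) = c *s (phi y *v a - lam y *s a)"
          by (simp add: mv_scale vec.scale_right_diff_distrib mult.commute)
        show "phi y *v (c *s a) - lam y *s (c *s a) \<in> U" unfolding eq by (rule mem)
      qed
    qed
    have UW: "U \<subseteq> W"
    proof
      fix u assume u: "u \<in> U"
      have "\<forall>y\<in>I. phi y *v u - lam y *s u \<in> U"
        using u IU vec.subspace_diff[OF U] vec.subspace_scale[OF U] by blast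
      thus "u \<in> W" using u UV by (auto simp: W_def)
    qed
    have v0W: "v0 \<in> W" using v0 lam by (auto simp: W_def)
    have WV: "W \<subseteq> V" by (auto simp: W_def)
    have Winv: "phi x *v w \<in> W" if xL: "x \<in> L" and w: "w \<in> W" for x w
    proof -
      have "phi x *v w \<in> V" using LV xL w WV by blast
      moreover have "phi y *v (phi x *v w) - lam y *s (phi x *v w) \<in> U" if yI: "y \<in> I" for y
      proof -
        define u where "u = phi y *v w - lam y *s w"
        have u: "u \<in> U" using w yI by (auto simp: W_def u_def)
        have bI: "brk x y \<in> I" using DI brk_in_Brk[OF xL] yI IL by blast
        define u' where "u' = phi (brk x y) *v w - lam (brk x y) *s w"
        have u': "u' \<in> U" using w bI by (auto simp: W_def u'_def)
        have u'': "u' = phi (brk x y) *v w" using lam_brk[OF xL yI] by (simp add: u'_def)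
        have "phi y *v (phi x *v w) - lam y *s (phi x *v w) = phi x *v u - u'"
          unfolding u'' u_def phi_brk brk_mv by (simp add: matrix_vector_mult_diff_distrib mv_scale)
        moreover have "phi x *v u \<in> U" using LU xL u by blast
        ultimately show ?thesis using vec.subspace_diff[OF U _ u'] by simp
      qed
      ultimately show ?thesis by (simp add: W_def)
    qed
    obtain w c where w: "w \<in> W" "w \<notin> U" and wc: "phi z *v w - c *s w \<in> U"
      using eig_mod[OF U Wsub _ v0W v0(2), of "phi z"] Winv[OF zL] by blast
    have "\<exists>c. phi x *v w - c *s w \<in> U" if xL: "x \<in> L" for x
    proof -
      obtain y k where y: "y \<in> I" and xy: "x = y + smat k z" using decomp[OF xL] by blast
      have wy: "phi y *v w - lam y *s w \<in> U" using w(1) y by (auto simp: W_def)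
      have eq: "phi x *v w - (lam y + emb k * c) *s w
          = (phi y *v w - lam y *s w) + emb k *s (phi z *v w - c *s w)"
        by (simp add: xy matrix_vector_mult_add_rdistrib smat_mv vector_sadd_rdistrib
            vec.scale_right_diff_distrib algebra_simps)
      have mem: "(phi y *v w - lam y *s w) + emb k *s (phi z *v w - c *s w) \<in> U"
        by (rule vec.subspace_add[OF U wy vec.subspace_scale[OF U wc]])
      have "phi x *v w - (lam y + emb k * c) *s w \<in> U" unfolding eq by (rule mem)
      thus ?thesis by (rule exI)
    qed
    thus ?thesis using w WV by blast
  qed
qed

end


definition nilU :: "('a::field^'n::finite) set \<Rightarrow> ('a,'n) sqm \<Rightarrow> bool" where
  "nilU U X \<longleftrightarrow> (\<exists>k. \<forall>w. it X k w \<in> U)"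

context ac begin

lemma flag:
  fixes s :: "('f,'n::finite) sqm set" and U :: "('k^'n) set"
  assumes sub: "lie_subalg s" and sol: "lie_solvable s"
  shows "vec.subspace U \<Longrightarrow> (\<forall>x\<in>s. \<forall>u\<in>U. phi x *v u \<in> U) \<Longrightarrow>
    \<forall>x\<in>s. \<forall>y\<in>s. (nilU U (phi x) \<and> nilU U (phi y) \<longrightarrow> nilU U (phi (x + y))) \<and> nilU U (phi (brk x y))"
proof (induction "CARD('n) - vec.dim U" arbitrary: U rule: less_induct)
  case less
  note U = less.prems(1) and inv = less.prems(2)
  have ssub: "mv.subspace s" using sub by (simp add: lie_subalg_def)
  show ?case
  proof (cases "U = UNIV")
    case True
    thus ?thesis by (auto simp: nilU_def)
  next
    case False
    then obtain v1 where v1: "v1 \<notin> U" by blast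
    obtain v where v: "v \<notin> U" and wt: "\<forall>x\<in>s. \<exists>c. phi x *v v - c *s v \<in> U"
      using lie_rel[OF sub sol U vec.subspace_UNIV _ _ v1 inv] by auto
    define U' where "U' = vec.span (insert v U)"
    have U'sub: "vec.subspace U'" by (simp add: U'_def)
    have UU': "U \<subseteq> U'" unfolding U'_def using vec.span_superset by blast
    have vU': "v \<in> U'" unfolding U'_def by (rule vec.span_base) simp
    have inv': "\<forall>x\<in>s. \<forall>u\<in>U'. phi x *v u \<in> U'"
    proof (intro ballI)
      fix x u assume x: "x \<in> s" and u: "u \<in> U'"
      have "\<forall>y\<in>insert v U. phi x *v y \<in> U'"
      proof
        fix y assume "y \<in> insert v U"
        then consider "y = v" | "y \<in> U" by blast
        thus "phi x *v y \<in> U'"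
        proof cases
          case 1
          obtain c where c: "phi x *v v - c *s v \<in> U" using wt x by blast
          have "phi x *v v = (phi x *v v - c *s v) + c *s v" by simp
          moreover have "(phi x *v v - c *s v) + c *s v \<in> U'"
            using c UU' vU' by (intro vec.subspace_add[OF U'sub] vec.subspace_scale[OF U'sub]) auto
          ultimately show ?thesis using 1 by simp
        next
          case 2 thus ?thesis using inv x UU' by blast
        qed
      qed
      thus "phi x *v u \<in> U'" using span_map[OF _ U'sub u[unfolded U'_def]] by blast
    qed
    have spU: "vec.span U = U" by (rule vec.span_eq_iff[THEN iffD2, OF U])
    have "vec.dim U' = vec.dim U + 1"
      unfolding U'_def vec.dim_span using v
      by (simp add: vec.dim_insert spU)
    moreover have "vec.dim U' \<le> CARD('n)"
      using vec.dim_subset_UNIV[of U'] by (simp add: vec.dimension_def card_cart_basis)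
    ultimately have dlt: "CARD('n) - vec.dim U' < CARD('n) - vec.dim U" by simp
    have IH: "\<forall>x\<in>s. \<forall>y\<in>s. (nilU U' (phi x) \<and> nilU U' (phi y) \<longrightarrow> nilU U' (phi (x + y))) \<and> nilU U' (phi (brk x y))"
      by (rule less.hyps[OF dlt U'sub inv'])
    define lam where "lam x = (SOME c. phi x *v v - c *s v \<in> U)" for x
    have lam: "phi x *v v - lam x *s v \<in> U" if "x \<in> s" for x
      unfolding lam_def by (rule someI_ex[where P = "\<lambda>c. phi x *v v - c *s v \<in> U"]) (use wt that in blast)
    have lam_uniq: "c = lam x" if "x \<in> s" "phi x *v v - c *s v \<in> U" for x c
    proof (rule ccontr)
      assume ne: "c \<noteq> lam x"
      have "(phi x *v v - c *s v) - (phi x *v v - lam x *s v) \<in> U"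
        by (rule vec.subspace_diff[OF U that(2) lam[OF that(1)]])
      hence "(lam x - c) *s v \<in> U" by (simp add: vector_sub_rdistrib)
      hence "inverse (lam x - c) *s ((lam x - c) *s v) \<in> U" by (rule vec.subspace_scale[OF U])
      moreover have nz: "lam x - c \<noteq> 0" using ne by simp
      moreover have "inverse (lam x - c) *s ((lam x - c) *s v) = v"
        by (simp only: vec.scale_scale left_inverse[OF nz] vec.scale_one)
      ultimately have "v \<in> U" by simp
      thus False using v by simp
    qed
    have lam_add: "lam (x + y) = lam x + lam y" if x: "x \<in> s" and y: "y \<in> s" for x y
    proof -
      have xy: "x + y \<in> s" by (rule mv.subspace_add[OF ssub x y])
      have "(phi x *v v - lam x *s v) + (phi y *v v - lam y *s v) \<in> U"
        by (rule vec.subspace_add[OF U lam[OF x] lam[OF y]])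
      moreover have "(phi x *v v - lam x *s v) + (phi y *v v - lam y *s v) = phi (x + y) *v v - (lam x + lam y) *s v"
        by (simp add: matrix_vector_mult_add_rdistrib vector_sadd_rdistrib)
      ultimately have "phi (x + y) *v v - (lam x + lam y) *s v \<in> U" by simp
      from lam_uniq[OF xy this] show ?thesis by simp
    qed
    have lam_brk: "lam (brk x y) = 0" if x: "x \<in> s" and y: "y \<in> s" for x y
    proof -
      have bxy: "brk x y \<in> s" using sub x y by (simp add: lie_subalg_def)
      define u1 where "u1 = phi y *v v - lam y *s v"
      define u2 where "u2 = phi x *v v - lam x *s v"
      have u1: "u1 \<in> U" unfolding u1_def by (rule lam[OF y])
      have u2: "u2 \<in> U" unfolding u2_def by (rule lam[OF x])
      have eq: "phi (brk x y) *v v - 0 *s v = (lam y *s u2 + phi x *v u1) - (lam x *s u1 + phi y *v u2)"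
        unfolding u1_def u2_def phi_brk brk_mv
        by (simp add: matrix_vector_mult_diff_distrib mv_scale vec.scale_right_diff_distrib algebra_simps)
      have "(lam y *s u2 + phi x *v u1) - (lam x *s u1 + phi y *v u2) \<in> U"
        using u1 u2 inv x y
        by (intro vec.subspace_diff[OF U] vec.subspace_add[OF U] vec.subspace_scale[OF U]) auto
      hence "phi (brk x y) *v v - 0 *s v \<in> U" unfolding eq .
      from lam_uniq[OF bxy this] show ?thesis by simp
    qed
    have it_lam: "it (phi x) k v - (lam x ^ k) *s v \<in> U" if x: "x \<in> s" for x k
    proof (induction k)
      case 0 thus ?case using vec.subspace_0[OF U] by simp
    next
      case (Suc k)
      have eq: "it (phi x) (Suc k) v - (lam x ^ Suc k) *s v
          = phi x *v (it (phi x) k v - (lam x ^ k) *s v) + (lam x ^ k) *s (phi x *v v - lam x *s v)"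
        by (simp add: matrix_vector_mult_diff_distrib mv_scale vec.scale_right_diff_distrib mult.commute)
      have "phi x *v (it (phi x) k v - (lam x ^ k) *s v) + (lam x ^ k) *s (phi x *v v - lam x *s v) \<in> U"
        using Suc inv x lam[OF x] by (intro vec.subspace_add[OF U] vec.subspace_scale[OF U]) auto
      thus ?case unfolding eq .
    qed
    have nil_lam: "lam x = 0" if x: "x \<in> s" and n: "nilU U (phi x)" for x
    proof -
      obtain k where k: "\<forall>w. it (phi x) k w \<in> U" using n by (auto simp: nilU_def)
      have "it (phi x) k v - (it (phi x) k v - (lam x ^ k) *s v) \<in> U"
        by (rule vec.subspace_diff[OF U spec[OF k] it_lam[OF x]])
      moreover have "it (phi x) k v - (it (phi x) k v - (lam x ^ k) *s v) = (lam x ^ k) *s v" by simp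
      ultimately have lk: "(lam x ^ k) *s v \<in> U" by (simp only:)
      show ?thesis
      proof (rule ccontr)
        assume "lam x \<noteq> 0"
        hence nz: "lam x ^ k \<noteq> 0" by simp
        have "inverse (lam x ^ k) *s ((lam x ^ k) *s v) \<in> U" by (rule vec.subspace_scale[OF U lk])
        moreover have "inverse (lam x ^ k) *s ((lam x ^ k) *s v) = v"
          by (simp only: vec.scale_scale left_inverse[OF nz] vec.scale_one)
        ultimately show False using v by simp
      qed
    qed
    have nil_back: "nilU U (phi x)" if x: "x \<in> s" and nU: "nilU U' (phi x)" and l: "lam x = 0" for x
    proof -
      obtain k where k: "\<forall>w. it (phi x) k w \<in> U'" using nU by (auto simp: nilU_def)
      have Xv: "phi x *v v \<in> U" using lam[OF x] l by simp
      have "\<forall>y\<in>insert v U. phi x *v y \<in> U" using Xv inv x by blast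
      hence "\<forall>w. phi x *v it (phi x) k w \<in> U"
        using span_map[OF _ U] k unfolding U'_def by blast
      hence "\<forall>w. it (phi x) (Suc k) w \<in> U" by simp
      thus ?thesis unfolding nilU_def by blast
    qed
    have up: "nilU U X \<Longrightarrow> nilU U' X" for X using UU' by (auto simp: nilU_def)
    show ?thesis
    proof (intro ballI conjI)
      fix x y assume x: "x \<in> s" and y: "y \<in> s"
      have xy: "x + y \<in> s" by (rule mv.subspace_add[OF ssub x y])
      have bxy: "brk x y \<in> s" using sub x y by (simp add: lie_subalg_def)
      show "nilU U (phi x) \<and> nilU U (phi y) \<longrightarrow> nilU U (phi (x + y))"
      proof
        assume nxy: "nilU U (phi x) \<and> nilU U (phi y)"
        hence nx: "nilU U (phi x)" and ny: "nilU U (phi y)" by auto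
        have "nilU U' (phi (x + y))" using IH x y up[OF nx] up[OF ny] by blast
        moreover have "lam (x + y) = 0" using lam_add[OF x y] nil_lam[OF x nx] nil_lam[OF y ny] by simp
        ultimately show "nilU U (phi (x + y))" using nil_back[OF xy] by blast
      qed
      have "nilU U' (phi (brk x y))" using IH x y by blast
      thus "nilU U (phi (brk x y))" using nil_back[OF bxy] lam_brk[OF x y] by blast
    qed
  qed
qed

lemma nilU_0: "nilU {0} X \<longleftrightarrow> nilpotent_mat X"
  by (simp add: nilU_def nilpotent_vec)

lemma nil_closed:
  fixes s :: "('f,'n::finite) sqm set"
  assumes sub: "lie_subalg s" and sol: "lie_solvable s" and x: "x \<in> s" and y: "y \<in> s"
  shows "nilpotent_mat x \<Longrightarrow> nilpotent_mat y \<Longrightarrow> nilpotent_mat (x + y)"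
    and "nilpotent_mat (brk x y)"
proof -
  have U: "vec.subspace ({0} :: ('k^'n) set)" by (simp add: vec.subspace_def)
  have "\<forall>x\<in>s. \<forall>y\<in>s. (nilU {0} (phi x) \<and> nilU {0} (phi y) \<longrightarrow> nilU {0} (phi (x + y))) \<and> nilU {0} (phi (brk x y))"
    by (rule flag[OF sub sol U]) simp
  thus "nilpotent_mat x \<Longrightarrow> nilpotent_mat y \<Longrightarrow> nilpotent_mat (x + y)" and "nilpotent_mat (brk x y)"
    using x y by (simp_all add: nilU_0 del: phi_add phi_brk)
qed

end


lemma it_smat: "it (smat c A) k w = c ^ k *s it A k w"
  by (induction k) (simp_all add: smat_mv mv_scale mult.commute)

lemma nilpotent_smat: "nilpotent_mat A \<Longrightarrow> nilpotent_mat (smat c A)"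
  for A :: "('a::field,'n::finite) sqm"
  unfolding nilpotent_vec by (auto simp: it_smat)

lemma nilpotent_0: "nilpotent_mat (0 :: ('a::field,'n::finite) sqm)"
  unfolding nilpotent_vec by (rule exI[of _ 1]) simp

lemma span_finite_rep:
  assumes "finite B" "x \<in> mv.span B"
  shows "\<exists>c. x = (\<Sum>b\<in>B. smat (c b) b)"
  using assms mv.span_finite by blast

context ac begin

theorem main:
  fixes s h d B :: "('f,'n::finite) sqm set"
    and js jn :: "('f,'n) sqm \<Rightarrow> ('f,'n) sqm"
  assumes sub: "lie_subalg s" and sol: "lie_solvable s"
    and d_sub: "lie_subalg d" "d \<subseteq> s" "\<forall>x\<in>d. \<forall>y\<in>d. brk x y = 0"
    and d_ss: "\<forall>x\<in>d. semisimple_mat emb x"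
    and d_compl: "d \<inter> {x \<in> s. nilpotent_mat x} = {0}"
    and h_eq: "h = centralizer s d" "h = setsum d (centralizer {x \<in> s. nilpotent_mat x} d)"
    and basis: "B \<subseteq> h" "\<not> lindep B" "lspan B = h"
    and jordan: "\<forall>b\<in>B. b = js b + jn b \<and> semisimple_mat emb (js b) \<and> nilpotent_mat (jn b)
                   \<and> js b ** jn b = jn b ** js b"
  shows "d = lspan (js ` B) \<and>
         {x \<in> s. nilpotent_mat x} = lspan (jn ` B \<union> fitting_one h s)"
proof -
  define N where "N = {x \<in> s. nilpotent_mat x}"
  have ssub: "mv.subspace s" using sub by (simp add: lie_subalg_def)
  have dsub: "mv.subspace d" using d_sub(1) by (simp add: lie_subalg_def)
  have Nsub: "mv.subspace N"
  proof (rule mv.subspaceI)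
    show "0 \<in> N" by (simp add: N_def mv.subspace_0[OF ssub] nilpotent_0)
    show "x + y \<in> N" if "x \<in> N" "y \<in> N" for x y
      using that nil_closed(1)[OF sub sol] mv.subspace_add[OF ssub] by (auto simp: N_def)
    show "smat c x \<in> N" if "x \<in> N" for c x
      using that mv.subspace_scale[OF ssub] nilpotent_smat by (auto simp: N_def)
  qed
  have hs: "h \<subseteq> s" using h_eq(1) by (auto simp: centralizer_def)
  have dh: "d \<subseteq> h" using h_eq(1) d_sub(2,3) by (auto simp: centralizer_def)
  have brkN: "brk x y \<in> N" if "x \<in> s" "y \<in> s" for x y
    using that nil_closed(2)[OF sub sol] sub by (auto simp: N_def lie_subalg_def)
  have FN: "fitting_one h s \<subseteq> N"
  proof -
    have "Brk h s \<subseteq> N" unfolding Brk_def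
      by (rule mv.span_minimal[OF _ Nsub]) (use brkN hs in blast)
    thus ?thesis using fitting_sub_Brk by blast
  qed
  have finB: "finite B" using basis(2) mv.finiteI_independent by blast
  have jB: "js b \<in> d \<and> jn b \<in> N" if bB: "b \<in> B" for b
  proof -
    have "b \<in> h" using bB basis(1) by blast
    then obtain dl m where dl: "dl \<in> d" and m: "m \<in> centralizer N d" and bdm: "b = dl + m"
      using h_eq(2) by (auto simp: setsum_def N_def)
    have mN: "m \<in> N" and mn: "nilpotent_mat m" and md: "brk m dl = 0"
      using m dl by (auto simp: centralizer_def N_def)
    have jb: "b = js b + jn b" "semisimple_mat emb (js b)" "nilpotent_mat (jn b)"
      "js b ** jn b = jn b ** js b" using jordan bB by auto
    have "phi dl = phi (js b)"
    proof (rule jordan_unique)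
      show "\<exists>(P::('k,'n) sqm) D. invertible P \<and> diagonal_mat D \<and> P ** phi dl = D ** P"
        using d_ss dl by (auto simp: semisimple_mat_def)
      show "\<exists>(P::('k,'n) sqm) D. invertible P \<and> diagonal_mat D \<and> P ** phi (js b) = D ** P"
        using jb(2) by (auto simp: semisimple_mat_def)
      show "nilpotent_mat (phi m)" using mn by simp
      show "nilpotent_mat (phi (jn b))" using jb(3) by simp
      show "phi dl ** phi m = phi m ** phi dl"
        using md by (metis brk_def eq_iff_diff_eq_0 phi_mult)
      show "phi (js b) ** phi (jn b) = phi (jn b) ** phi (js b)"
        using jb(4) by (metis phi_mult)
      show "phi dl + phi m = phi (js b) + phi (jn b)"
        using bdm jb(1) by (metis phi_add)
    qed
    hence e1: "js b = dl" by simp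
    hence "jn b = m" using bdm jb(1) by simp
    thus ?thesis using e1 dl mN by simp
  qed
  have split: "\<exists>c. x = (\<Sum>b\<in>B. smat (c b) (js b)) + (\<Sum>b\<in>B. smat (c b) (jn b))" if xh: "x \<in> h" for x
  proof -
    obtain c where c: "x = (\<Sum>b\<in>B. smat (c b) b)"
      using span_finite_rep[OF finB] xh basis(3) by blast
    have "(\<Sum>b\<in>B. smat (c b) b) = (\<Sum>b\<in>B. smat (c b) (js b) + smat (c b) (jn b))"
    proof (rule sum.cong)
      fix b assume "b \<in> B"
      hence "b = js b + jn b" using jordan by blast
      thus "smat (c b) b = smat (c b) (js b) + smat (c b) (jn b)"
        by (metis mv.scale_right_distrib)
    qed simp
    thus ?thesis using c by (auto simp: sum.distrib)
  qed
  have Sj_d: "(\<Sum>b\<in>B. smat (c b) (js b)) \<in> d" for c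
    using jB by (intro mv.subspace_sum[OF dsub] mv.subspace_scale[OF dsub]) auto
  have Sn_N: "(\<Sum>b\<in>B. smat (c b) (jn b)) \<in> N" for c
    using jB by (intro mv.subspace_sum[OF Nsub] mv.subspace_scale[OF Nsub]) auto
  have dN0: "y \<in> d \<Longrightarrow> y \<in> N \<Longrightarrow> y = 0" for y
    using d_compl by (auto simp: N_def)
  have goal1: "d = lspan (js ` B)"
  proof
    show "lspan (js ` B) \<subseteq> d"
      by (rule mv.span_minimal[OF _ dsub]) (use jB in blast)
  next
    show "d \<subseteq> lspan (js ` B)"
    proof
      fix y assume yd: "y \<in> d"
      obtain c where c: "y = (\<Sum>b\<in>B. smat (c b) (js b)) + (\<Sum>b\<in>B. smat (c b) (jn b))"
        using split dh yd by blast
      have "(\<Sum>b\<in>B. smat (c b) (jn b)) = y - (\<Sum>b\<in>B. smat (c b) (js b))" using c by simp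
      hence "(\<Sum>b\<in>B. smat (c b) (jn b)) \<in> d" using mv.subspace_diff[OF dsub yd Sj_d] by simp
      hence "(\<Sum>b\<in>B. smat (c b) (jn b)) = 0" using dN0 Sn_N by blast
      hence "y = (\<Sum>b\<in>B. smat (c b) (js b))" using c by simp
      also have "\<dots> \<in> lspan (js ` B)"
        by (intro mv.span_sum mv.span_scale mv.span_base) auto
      finally show "y \<in> lspan (js ` B)" .
    qed
  qed
  have goal2: "N = lspan (jn ` B \<union> fitting_one h s)"
  proof
    show "lspan (jn ` B \<union> fitting_one h s) \<subseteq> N"
      by (rule mv.span_minimal[OF _ Nsub]) (use jB FN in blast)
  next
    show "N \<subseteq> lspan (jn ` B \<union> fitting_one h s)"
    proof
      fix x assume xN: "x \<in> N"
      hence xs: "x \<in> s" by (simp add: N_def)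
      obtain a where ah: "a \<in> h" and z: "x - a \<in> fitting_one h s"
        using s_decomp[OF sub hs dh d_ss d_sub(3) h_eq(1) xs] by blast
      obtain c where c: "a = (\<Sum>b\<in>B. smat (c b) (js b)) + (\<Sum>b\<in>B. smat (c b) (jn b))"
        using split ah by blast
      let ?Sj = "\<Sum>b\<in>B. smat (c b) (js b)" and ?Sn = "\<Sum>b\<in>B. smat (c b) (jn b)"
      have zN: "x - a \<in> N" using FN z by blast
      have "x - (x - a) - ?Sn \<in> N"
        by (rule mv.subspace_diff[OF Nsub mv.subspace_diff[OF Nsub xN zN] Sn_N])
      moreover have "x - (x - a) - ?Sn = ?Sj" using c by simp
      ultimately have "?Sj \<in> N" by simp
      hence Sj0: "?Sj = 0" using dN0 Sj_d by blast
      have "x = (x - a) + ?Sn" using c Sj0 by simp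
      also have "\<dots> \<in> lspan (jn ` B \<union> fitting_one h s)"
      proof (rule mv.span_add)
        show "x - a \<in> lspan (jn ` B \<union> fitting_one h s)" using z by (intro mv.span_base) blast
        show "?Sn \<in> lspan (jn ` B \<union> fitting_one h s)"
          by (intro mv.span_sum mv.span_scale mv.span_base) auto
      qed
      finally show "x \<in> lspan (jn ` B \<union> fitting_one h s)" .
    qed
  qed
  show ?thesis using goal1 goal2 by (simp add: N_def)
qed

end

theorem lemma4p3:
  fixes emb :: "'f::field_char_0 \<Rightarrow> 'k::field"
    and G :: "('k,'n::finite) sqm set"
    and s h d :: "('f,'n) sqm set"
    and B :: "('f,'n) sqm set"
    and js jn :: "('f,'n) sqm \<Rightarrow> ('f,'n) sqm"
  assumes clos: "is_alg_closure emb"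
    and grp: "alg_group_over emb G"
    and rad: "solvable_radical (lie_alg_F emb G) s"
    and compl: "\<exists>t. lie_subalg t \<and> t \<subseteq> s \<and> (\<forall>x\<in>t. \<forall>y\<in>t. brk x y = 0)
                  \<and> (\<forall>x\<in>t. semisimple_mat emb x)
                  \<and> t \<inter> {x \<in> s. nilpotent_mat x} = {0} \<and> setsum t {x \<in> s. nilpotent_mat x} = s"
    and cartan: "cartan_subalg s h"
    and d_sub: "lie_subalg d" "d \<subseteq> s" "\<forall>x\<in>d. \<forall>y\<in>d. brk x y = 0"
    and d_ss: "\<forall>x\<in>d. semisimple_mat emb x"
    and d_compl: "d \<inter> {x \<in> s. nilpotent_mat x} = {0}" "setsum d {x \<in> s. nilpotent_mat x} = s"
    and h_eq: "h = centralizer s d" "h = setsum d (centralizer {x \<in> s. nilpotent_mat x} d)"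
    and basis: "B \<subseteq> h" "\<not> lindep B" "lspan B = h"
    and jordan: "\<forall>b\<in>B. b = js b + jn b \<and> semisimple_mat emb (js b) \<and> nilpotent_mat (jn b)
                   \<and> js b ** jn b = jn b ** js b"
  shows "d = lspan (js ` B) \<and>
         {x \<in> s. nilpotent_mat x} = lspan (jn ` B \<union> fitting_one h s)"
proof -
  interpret ac emb by unfold_locales (rule clos)
  have ideal: "lie_ideal s (lie_alg_F emb G)" and sol: "lie_solvable s"
    using rad by (auto simp: solvable_radical_def)
  have sub: "lie_subalg s"
    using ideal unfolding lie_ideal_def lie_subalg_def by blast
  show ?thesis
    by (rule main[OF sub sol d_sub d_ss d_compl(1) h_eq basis jordan])
qed


end
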